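(* Let $G$ be a graph that is $2$-cell embedded in a closed orientable surface $S$ of genus $g$, and let $\mathcal C$ be a peripheral family of cycles of $G$. If none of the cycles in $\mathcal C$ is facial in this embedding, then $|\mathcal C|\le g$.
   Context: Graphs are finite, simple and connected. A cycle $C$ of $G$ is peripheral if it is an induced cycle (has no chords in $G$) and is non-separating, i.e. $G-V(C)$ is connected. A family $\mathcal C$ of cycles of $G$ is a peripheral family if every cycle in it is peripheral, any two cycles in $\mathcal C$ are vertex-disjoint and nonadjacent (no edge of $G$ joins them), and $G-\bigcup\{V(C): C\in\mathcal C\}$ is connected. A cycle is facial in an embedding if it bounds a face of the embedding. *)

theory Defs
  imports Main
begin

definition connected_set :: "('v \<Rightarrow> 'v \<Rightarrow> bool) \<Rightarrow> 'v set \<Rightarrow> bool" where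
  "connected_set E W \<longleftrightarrow>
     (\<forall>u\<in>W. \<forall>v\<in>W. (\<lambda>x y. E x y \<and> x \<in> W \<and> y \<in> W)\<^sup>*\<^sup>* u v)"

definition simple_graph :: "'v set \<Rightarrow> ('v \<Rightarrow> 'v \<Rightarrow> bool) \<Rightarrow> bool" where
  "simple_graph V E \<longleftrightarrow> finite V \<and> V \<noteq> {} \<and>
     (\<forall>u v. E u v \<longrightarrow> u \<in> V \<and> v \<in> V \<and> u \<noteq> v \<and> E v u)"

definition connected_graph :: "'v set \<Rightarrow> ('v \<Rightarrow> 'v \<Rightarrow> bool) \<Rightarrow> bool" where
  "connected_graph V E \<longleftrightarrow> simple_graph V E \<and> connected_set E V"

definition edges :: "('v \<Rightarrow> 'v \<Rightarrow> bool) \<Rightarrow> 'v set set" where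
  "edges E = {{u, v} | u v. E u v}"

text \<open>An orientable
  2-cell embedding is described (Heffter--Edmonds--Ringel) by a rotation system:
  a permutation of the darts that at each vertex cyclically permutes the darts
  leaving that vertex.\<close>

definition darts :: "('v \<Rightarrow> 'v \<Rightarrow> bool) \<Rightarrow> ('v \<times> 'v) set" where
  "darts E = {(u, v). E u v}"

definition rev_dart :: "'v \<times> 'v \<Rightarrow> 'v \<times> 'v" where
  "rev_dart d = (snd d, fst d)"

definition rotation_system ::
  "'v set \<Rightarrow> ('v \<Rightarrow> 'v \<Rightarrow> bool) \<Rightarrow> ('v \<times> 'v \<Rightarrow> 'v \<times> 'v) \<Rightarrow> bool" where
  "rotation_system V E \<rho> \<longleftrightarrow>
     bij_betw \<rho> (darts E) (darts E) \<and>
     (\<forall>d\<in>darts E. fst (\<rho> d) = fst d) \<and>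
     (\<forall>d\<in>darts E. \<forall>d'\<in>darts E. fst d = fst d' \<longrightarrow> (\<exists>n. (\<rho> ^^ n) d = d'))"

definition orbit :: "('a \<Rightarrow> 'a) \<Rightarrow> 'a \<Rightarrow> 'a set" where
  "orbit f x = {(f ^^ n) x | n. True}"

definition face_perm :: "('v \<times> 'v \<Rightarrow> 'v \<times> 'v) \<Rightarrow> 'v \<times> 'v \<Rightarrow> 'v \<times> 'v" where
  "face_perm \<rho> = \<rho> \<circ> rev_dart"

definition faces :: "('v \<Rightarrow> 'v \<Rightarrow> bool) \<Rightarrow> ('v \<times> 'v \<Rightarrow> 'v \<times> 'v) \<Rightarrow> ('v \<times> 'v) set set" where
  "faces E \<rho> = orbit (face_perm \<rho>) ` darts E"

text \<open>Number of faces; an edgeless (one-vertex) graph has a single face.\<close>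

definition num_faces :: "('v \<Rightarrow> 'v \<Rightarrow> bool) \<Rightarrow> ('v \<times> 'v \<Rightarrow> 'v \<times> 'v) \<Rightarrow> nat" where
  "num_faces E \<rho> = (if darts E = {} then 1 else card (faces E \<rho>))"

text \<open>G (given by V, E) is 2-cell embedded in the closed orientable surface of
  genus g via rotation system \<rho>: Euler's formula V - E + F = 2 - 2g.\<close>

definition orientable_embedding ::
  "'v set \<Rightarrow> ('v \<Rightarrow> 'v \<Rightarrow> bool) \<Rightarrow> ('v \<times> 'v \<Rightarrow> 'v \<times> 'v) \<Rightarrow> nat \<Rightarrow> bool" where
  "orientable_embedding V E \<rho> g \<longleftrightarrow>
     connected_graph V E \<and> rotation_system V E \<rho> \<and>
     int (card V) - int (card (edges E)) + int (num_faces E \<rho>) = 2 - 2 * int g"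

definition cyc_darts :: "'v list \<Rightarrow> ('v \<times> 'v) set" where
  "cyc_darts xs = {(xs ! i, xs ! ((i + 1) mod length xs)) | i. i < length xs}"

definition is_cycle :: "'v set \<Rightarrow> ('v \<Rightarrow> 'v \<Rightarrow> bool) \<Rightarrow> 'v list \<Rightarrow> bool" where
  "is_cycle V E xs \<longleftrightarrow> length xs \<ge> 3 \<and> distinct xs \<and> set xs \<subseteq> V \<and>
     (\<forall>i < length xs. E (xs ! i) (xs ! ((i + 1) mod length xs)))"

definition induced_cycle :: "'v set \<Rightarrow> ('v \<Rightarrow> 'v \<Rightarrow> bool) \<Rightarrow> 'v list \<Rightarrow> bool" where
  "induced_cycle V E xs \<longleftrightarrow> is_cycle V E xs \<and>
     (\<forall>u\<in>set xs. \<forall>v\<in>set xs. E u v \<longrightarrow> (u, v) \<in> cyc_darts xs \<or> (v, u) \<in> cyc_darts xs)"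

definition peripheral_cycle :: "'v set \<Rightarrow> ('v \<Rightarrow> 'v \<Rightarrow> bool) \<Rightarrow> 'v list \<Rightarrow> bool" where
  "peripheral_cycle V E xs \<longleftrightarrow> induced_cycle V E xs \<and> connected_set E (V - set xs)"

definition peripheral_family :: "'v set \<Rightarrow> ('v \<Rightarrow> 'v \<Rightarrow> bool) \<Rightarrow> 'v list set \<Rightarrow> bool" where
  "peripheral_family V E \<C> \<longleftrightarrow>
     (\<forall>C\<in>\<C>. peripheral_cycle V E C) \<and>
     (\<forall>C\<in>\<C>. \<forall>C'\<in>\<C>. C \<noteq> C' \<longrightarrow>
        set C \<inter> set C' = {} \<and> (\<forall>u\<in>set C. \<forall>v\<in>set C'. \<not> E u v)) \<and>
     connected_set E (V - (\<Union>C\<in>\<C>. set C))"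

definition facial :: "('v \<Rightarrow> 'v \<Rightarrow> bool) \<Rightarrow> ('v \<times> 'v \<Rightarrow> 'v \<times> 'v) \<Rightarrow> 'v list \<Rightarrow> bool" where
  "facial E \<rho> xs \<longleftrightarrow> cyc_darts xs \<in> faces E \<rho> \<or> cyc_darts (rev xs) \<in> faces E \<rho>"

end

theory Submission
  imports Defs
begin


definition pm :: "('a \<Rightarrow> 'a) \<Rightarrow> 'a set \<Rightarrow> bool" where
  "pm f D \<longleftrightarrow> finite D \<and> f ` D \<subseteq> D \<and> inj_on f D"

lemma funpow_in: "f ` D \<subseteq> D \<Longrightarrow> x \<in> D \<Longrightarrow> (f^^n) x \<in> D"
  by (induction n) auto

lemma orbit_iff: "y \<in> orbit f x \<longleftrightarrow> (\<exists>n. y = (f^^n) x)"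
  unfolding orbit_def by auto

lemma orbit_self: "x \<in> orbit f x"
  unfolding orbit_iff by (rule exI[of _ 0]) simp

lemma orbit_step: "y \<in> orbit f x \<Longrightarrow> f y \<in> orbit f x"
  unfolding orbit_iff by (metis funpow.simps(2) comp_apply)

lemma orbit_f: "f x \<in> orbit f x"
  by (rule orbit_step[OF orbit_self])

lemma orbit_sub: assumes "x \<in> S" "\<And>y. y \<in> S \<Longrightarrow> f y \<in> S" shows "orbit f x \<subseteq> S"
proof
  fix y assume "y \<in> orbit f x"
  then obtain n where "y = (f^^n) x" by (auto simp: orbit_iff)
  moreover have "(f^^n) x \<in> S" by (induction n) (use assms in auto)
  ultimately show "y \<in> S" by simp
qed

lemma orbit_trans: "y \<in> orbit f x \<Longrightarrow> orbit f y \<subseteq> orbit f x"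
  by (rule orbit_sub) (auto intro: orbit_step)

lemma orbit_in: "f ` D \<subseteq> D \<Longrightarrow> x \<in> D \<Longrightarrow> orbit f x \<subseteq> D"
  by (rule orbit_sub) auto

lemma funpow_cancel:
  assumes "f ` D \<subseteq> D" "inj_on f D" "x \<in> D" "y \<in> D" "(f^^(i+k)) x = (f^^(j+k)) y"
  shows "(f^^i) x = (f^^j) y"
  using assms(5)
proof (induction k)
  case 0 then show ?case by simp
next
  case (Suc k)
  have "f ((f^^(i+k)) x) = f ((f^^(j+k)) y)" using Suc.prems by simp
  moreover have "(f^^(i+k)) x \<in> D" "(f^^(j+k)) y \<in> D" using funpow_in assms by metis+
  ultimately have "(f^^(i+k)) x = (f^^(j+k)) y" using assms(2) by (meson inj_onD)
  then show ?case using Suc.IH by simp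
qed

lemma cyc: assumes "pm f D" "x \<in> D" shows "x \<in> orbit f (f x)"
proof -
  have fin: "finite D" and sub: "f ` D \<subseteq> D" and inj: "inj_on f D" using assms(1) by (auto simp: pm_def)
  have "range (\<lambda>n. (f^^n) x) \<subseteq> D" using funpow_in[OF sub assms(2)] by auto
  then have "finite (range (\<lambda>n. (f^^n) x))" using fin finite_subset by blast
  then have "\<not> inj (\<lambda>n. (f^^n) x)" using finite_imageD by fastforce
  then obtain i j where ij: "i \<noteq> j" "(f^^i) x = (f^^j) x" by (auto simp: inj_def)
  have "\<exists>i j. i < j \<and> (f^^i) x = (f^^j) x"
  proof (cases "i < j")
    case True then show ?thesis using ij by blast
  next
    case False then show ?thesis using ij by (intro exI[of _ j] exI[of _ i]) auto
  qed
  then obtain i j where ij: "i < j" "(f^^i) x = (f^^j) x" by blast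
  have jj: "j = (j-i)+i" using ij(1) by simp
  have "(f^^(0+i)) x = (f^^((j-i)+i)) x" using ij(2) jj by simp
  then have "(f^^0) x = (f^^(j-i)) x" using funpow_cancel[OF sub inj assms(2) assms(2)] by blast
  moreover obtain m where m: "j - i = Suc m" using ij(1) by (cases "j-i") auto
  moreover have "(f^^Suc m) x = (f^^m) (f x)" by (simp only: funpow_Suc_right comp_apply)
  ultimately have "x = (f^^m) (f x)" by simp
  then show ?thesis unfolding orbit_iff by blast
qed

lemma orbit_sym: assumes "pm f D" "x \<in> D" "y \<in> orbit f x" shows "x \<in> orbit f y"
proof -
  have sub: "f ` D \<subseteq> D" using assms(1) by (auto simp: pm_def)
  obtain n where y: "y = (f^^n) x" using assms(3) by (auto simp: orbit_iff)
  have "x \<in> orbit f ((f^^n) x)"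
  proof (induction n)
    case 0 then show ?case by (simp add: orbit_self)
  next
    case (Suc n)
    have "(f^^n) x \<in> D" using funpow_in[OF sub assms(2)] by blast
    then have hh: "(f^^n) x \<in> orbit f (f ((f^^n) x))" by (rule cyc[OF assms(1)])
    have "orbit f ((f^^n) x) \<subseteq> orbit f ((f^^Suc n) x)" using orbit_trans[OF hh] by simp
    then show ?case using Suc.IH by auto
  qed
  then show ?thesis using y by simp
qed

lemma orbit_eq: assumes "pm f D" "x \<in> D" "y \<in> orbit f x" shows "orbit f y = orbit f x"
  using orbit_trans[OF assms(3)] orbit_trans[OF orbit_sym[OF assms]] by blast

lemma orbit_eq2: assumes "pm f D" "x \<in> D" "y \<in> D" "z \<in> orbit f x" "z \<in> orbit f y"
  shows "orbit f x = orbit f y"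
  using orbit_eq[OF assms(1,2,4)] orbit_eq[OF assms(1,3,5)] by simp

lemma orbit_cong: assumes "x \<in> S" "\<And>y. y \<in> S \<Longrightarrow> f y = g y" "\<And>y. y \<in> S \<Longrightarrow> f y \<in> S"
  shows "orbit f x = orbit g x"
proof -
  have "(f^^n) x = (g^^n) x \<and> (f^^n) x \<in> S" for n
    by (induction n) (use assms in auto)
  then show ?thesis unfolding orbit_def by metis
qed

lemma reach:
  assumes "s \<in> W" "a \<in> orbit f s" "\<And>w. w \<in> W \<Longrightarrow> w \<in> orbit f s \<Longrightarrow> w \<noteq> a \<Longrightarrow> f w \<in> W"
  shows "a \<in> W"
proof -
  have key: "(\<forall>j<m. (f^^j) s \<noteq> a) \<longrightarrow> (f^^m) s \<in> W" for m
  proof (induction m)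
    case 0 then show ?case using assms(1) by simp
  next
    case (Suc m)
    show ?case
    proof
      assume h: "\<forall>j<Suc m. (f^^j) s \<noteq> a"
      then have "(f^^m) s \<in> W" using Suc.IH by auto
      moreover have "(f^^m) s \<in> orbit f s" unfolding orbit_iff by blast
      moreover have "(f^^m) s \<noteq> a" using h by auto
      ultimately show "(f^^Suc m) s \<in> W" using assms(3) by simp
    qed
  qed
  obtain n where n: "a = (f^^n) s" using assms(2) by (auto simp: orbit_iff)
  define m where "m = (LEAST m. (f^^m) s = a)"
  have "(f^^m) s = a" unfolding m_def by (rule LeastI[of _ n]) (use n in simp)
  moreover have "\<forall>j<m. (f^^j) s \<noteq> a" unfolding m_def using not_less_Least by blast
  ultimately show ?thesis using key by metis
qed



definition tr :: "'a \<Rightarrow> 'a \<Rightarrow> 'a \<Rightarrow> 'a" where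
  "tr x y z = (if z = x then y else if z = y then x else z)"

definition orbs :: "('a \<Rightarrow> 'a) \<Rightarrow> 'a set \<Rightarrow> 'a set set" where
  "orbs f D = orbit f ` D"

lemma tr_tr: "(\<pi> \<circ> tr x y) \<circ> tr x y = \<pi>"
  by (rule ext) (simp add: tr_def)

lemma tr_in: "x \<in> D \<Longrightarrow> y \<in> D \<Longrightarrow> z \<in> D \<Longrightarrow> tr x y z \<in> D"
  by (simp add: tr_def)

lemma inj_tr: "inj (tr x y)"
  unfolding inj_def tr_def by auto

lemma pm_tr: assumes "pm \<pi> D" "x \<in> D" "y \<in> D" shows "pm (\<pi> \<circ> tr x y) D"
proof -
  have "tr x y ` D \<subseteq> D" using tr_in[OF assms(2,3)] by (rule image_subsetI)
  moreover have "inj_on (tr x y) D" using inj_tr by (metis inj_on_subset subset_UNIV)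
  moreover have "inj_on \<pi> D" "\<pi> ` D \<subseteq> D" "finite D" using assms(1) unfolding pm_def by auto
  ultimately have "inj_on (\<pi> \<circ> tr x y) D" "(\<pi> \<circ> tr x y) ` D \<subseteq> D"
    using comp_inj_on[of "tr x y" D \<pi>] inj_on_subset[of \<pi> D "tr x y ` D"] by (auto simp: image_comp[symmetric])
  then show ?thesis using \<open>finite D\<close> unfolding pm_def by simp
qed

lemma finite_orbs: "finite D \<Longrightarrow> finite (orbs f D)"
  unfolding orbs_def by simp

lemma unaffected:
  assumes "x \<notin> orbit \<pi> z" "y \<notin> orbit \<pi> z"
  shows "orbit (\<pi> \<circ> tr x y) z = orbit \<pi> z"
proof (rule orbit_cong[where S="orbit \<pi> z"])
  show "z \<in> orbit \<pi> z" by (rule orbit_self)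
  fix w assume w: "w \<in> orbit \<pi> z"
  then have "w \<noteq> x" "w \<noteq> y" using assms by auto
  then show "(\<pi> \<circ> tr x y) w = \<pi> w" by (simp add: tr_def)
  then show "(\<pi> \<circ> tr x y) w \<in> orbit \<pi> z" using orbit_step[OF w] by simp
qed

lemma merge_orbit:
  assumes pm: "pm \<pi> D" and xD: "x \<in> D" and yD: "y \<in> D" and ny: "y \<notin> orbit \<pi> x"
    and zD: "z \<in> D" and z: "z \<in> orbit \<pi> x \<union> orbit \<pi> y"
  shows "orbit (\<pi> \<circ> tr x y) z = orbit \<pi> x \<union> orbit \<pi> y"
proof -
  define \<pi>' where "\<pi>' = \<pi> \<circ> tr x y"
  define W where "W = orbit \<pi>' z"
  have nx: "x \<notin> orbit \<pi> y" using orbit_sym[OF pm yD] ny by blast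
  have pxy: "\<pi>' x = \<pi> y" "\<pi>' y = \<pi> x" unfolding \<pi>'_def tr_def by auto
  have poth: "\<pi>' w = \<pi> w" if "w \<noteq> x" "w \<noteq> y" for w using that unfolding \<pi>'_def tr_def by auto
  have WS: "W \<subseteq> orbit \<pi> x \<union> orbit \<pi> y"
    unfolding W_def
  proof (rule orbit_sub[OF z])
    fix w assume w: "w \<in> orbit \<pi> x \<union> orbit \<pi> y"
    have "tr x y w \<in> orbit \<pi> x \<union> orbit \<pi> y" using w orbit_self[of x] orbit_self[of y]
      unfolding tr_def by auto
    then show "\<pi>' w \<in> orbit \<pi> x \<union> orbit \<pi> y" unfolding \<pi>'_def
      using orbit_step[of "tr x y w" \<pi> x] orbit_step[of "tr x y w" \<pi> y] by auto
  qed
  have zW: "z \<in> W" unfolding W_def by (rule orbit_self)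
  have Wst: "\<pi>' w \<in> W" if "w \<in> W" for w unfolding W_def using that[unfolded W_def] by (rule orbit_step)
  have xy: "x \<in> W \<or> y \<in> W"
  proof (rule ccontr)
    assume "\<not> (x \<in> W \<or> y \<in> W)"
    then have "\<pi> w \<in> W" if "w \<in> W" for w using that poth[of w] Wst[of w] by (metis)
    then have "orbit \<pi> z \<subseteq> W" using orbit_sub[OF zW] by blast
    moreover have "x \<in> orbit \<pi> z \<or> y \<in> orbit \<pi> z"
      using z orbit_eq[OF pm xD, of z] orbit_eq[OF pm yD, of z] orbit_self[of x \<pi>] orbit_self[of y \<pi>]
      by auto
    ultimately show False using \<open>\<not> (x \<in> W \<or> y \<in> W)\<close> by auto
  qed
  have x2y: "y \<in> W" if "x \<in> W"
  proof (rule reach[where s="\<pi> y" and f=\<pi>])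
    show "\<pi> y \<in> W" using Wst[OF that] pxy by simp
    show "y \<in> orbit \<pi> (\<pi> y)" using cyc[OF pm yD] .
    fix w assume w: "w \<in> W" "w \<in> orbit \<pi> (\<pi> y)" "w \<noteq> y"
    have "w \<in> orbit \<pi> y" using w(2) orbit_trans[OF orbit_f[of \<pi> y]] by blast
    then have "w \<noteq> x" using nx by auto
    then show "\<pi> w \<in> W" using poth[of w] w Wst by metis
  qed
  have y2x: "x \<in> W" if "y \<in> W"
  proof (rule reach[where s="\<pi> x" and f=\<pi>])
    show "\<pi> x \<in> W" using Wst[OF that] pxy by simp
    show "x \<in> orbit \<pi> (\<pi> x)" using cyc[OF pm xD] .
    fix w assume w: "w \<in> W" "w \<in> orbit \<pi> (\<pi> x)" "w \<noteq> x"
    have "w \<in> orbit \<pi> x" using w(2) orbit_trans[OF orbit_f[of \<pi> x]] by blast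
    then have "w \<noteq> y" using ny by auto
    then show "\<pi> w \<in> W" using poth[of w] w Wst by metis
  qed
  have xW: "x \<in> W" and yW: "y \<in> W" using xy x2y y2x by auto
  have cl: "\<pi> w \<in> W" if "w \<in> W" for w
  proof -
    consider "w = x" | "w = y" | "w \<noteq> x" "w \<noteq> y" by blast
    then show ?thesis
    proof cases
      case 1 then show ?thesis using Wst[OF yW] pxy by simp
    next
      case 2 then show ?thesis using Wst[OF xW] pxy by simp
    next
      case 3 then show ?thesis using Wst[OF that] poth by simp
    qed
  qed
  have "orbit \<pi> x \<subseteq> W" "orbit \<pi> y \<subseteq> W" using orbit_sub cl xW yW by metis+
  then show ?thesis using WS unfolding W_def \<pi>'_def by blast
qed

lemma merge:
  assumes pm: "pm \<pi> D" and xD: "x \<in> D" and yD: "y \<in> D" and ny: "y \<notin> orbit \<pi> x"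
  shows "card (orbs (\<pi> \<circ> tr x y) D) + 1 = card (orbs \<pi> D)"
proof -
  define Ox where "Ox = orbit \<pi> x"
  define Oy where "Oy = orbit \<pi> y"
  have fin: "finite D" using pm by (simp add: pm_def)
  have nx: "x \<notin> orbit \<pi> y" using orbit_sym[OF pm yD] ny by blast
  have eq: "orbs (\<pi> \<circ> tr x y) D = insert (Ox \<union> Oy) (orbs \<pi> D - {Ox, Oy})"
  proof
    show "orbs (\<pi> \<circ> tr x y) D \<subseteq> insert (Ox \<union> Oy) (orbs \<pi> D - {Ox, Oy})"
    proof
      fix Q assume "Q \<in> orbs (\<pi> \<circ> tr x y) D"
      then obtain z where zD: "z \<in> D" and Q: "Q = orbit (\<pi> \<circ> tr x y) z" by (auto simp: orbs_def)
      show "Q \<in> insert (Ox \<union> Oy) (orbs \<pi> D - {Ox, Oy})"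
      proof (cases "z \<in> Ox \<union> Oy")
        case True
        then show ?thesis using merge_orbit[OF pm xD yD ny zD] Q unfolding Ox_def Oy_def by simp
      next
        case False
        have "x \<notin> orbit \<pi> z"
        proof
          assume "x \<in> orbit \<pi> z"
          then have "orbit \<pi> z = Ox" using orbit_eq2[OF pm zD xD _ orbit_self] Ox_def by blast
          then show False using False orbit_self[of z \<pi>] by auto
        qed
        moreover have "y \<notin> orbit \<pi> z"
        proof
          assume "y \<in> orbit \<pi> z"
          then have "orbit \<pi> z = Oy" using orbit_eq2[OF pm zD yD _ orbit_self] Oy_def by blast
          then show False using False orbit_self[of z \<pi>] by auto
        qed
        ultimately have "Q = orbit \<pi> z" using Q unaffected by metis
        moreover have "orbit \<pi> z \<noteq> Ox" "orbit \<pi> z \<noteq> Oy" using False orbit_self[of z \<pi>] by auto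
        ultimately show ?thesis using zD by (auto simp: orbs_def)
      qed
    qed
  next
    show "insert (Ox \<union> Oy) (orbs \<pi> D - {Ox, Oy}) \<subseteq> orbs (\<pi> \<circ> tr x y) D"
    proof
      fix Q assume Q: "Q \<in> insert (Ox \<union> Oy) (orbs \<pi> D - {Ox, Oy})"
      show "Q \<in> orbs (\<pi> \<circ> tr x y) D"
      proof (cases "Q = Ox \<union> Oy")
        case True
        then have "Q = orbit (\<pi> \<circ> tr x y) x"
          using merge_orbit[OF pm xD yD ny xD] orbit_self[of x \<pi>] unfolding Ox_def Oy_def by simp
        then show ?thesis using xD by (auto simp: orbs_def)
      next
        case False
        then obtain z where zD: "z \<in> D" and Oz: "Q = orbit \<pi> z" "Q \<noteq> Ox" "Q \<noteq> Oy"
          using Q by (auto simp: orbs_def)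
        have "x \<notin> Q" using Oz orbit_eq2[OF pm zD xD _ orbit_self] Ox_def by blast
        moreover have "y \<notin> Q" using Oz orbit_eq2[OF pm zD yD _ orbit_self] Oy_def by blast
        ultimately have "Q = orbit (\<pi> \<circ> tr x y) z" using Oz unaffected by metis
        then show ?thesis using zD by (auto simp: orbs_def)
      qed
    qed
  qed
  have inO: "Ox \<in> orbs \<pi> D" "Oy \<in> orbs \<pi> D" using xD yD by (auto simp: orbs_def Ox_def Oy_def)
  have ne: "Ox \<noteq> Oy" using ny orbit_self[of y \<pi>] Ox_def Oy_def by auto
  have notin: "Ox \<union> Oy \<notin> orbs \<pi> D - {Ox, Oy}"
  proof
    assume "Ox \<union> Oy \<in> orbs \<pi> D - {Ox, Oy}"
    then obtain z where zD: "z \<in> D" and "Ox \<union> Oy = orbit \<pi> z" by (auto simp: orbs_def)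
    then have "x \<in> orbit \<pi> z" "y \<in> orbit \<pi> z" using orbit_self[of x \<pi>] orbit_self[of y \<pi>] Ox_def Oy_def by auto
    then have "orbit \<pi> z = Ox" using orbit_eq2[OF pm zD xD _ orbit_self] Ox_def by blast
    then show False using \<open>y \<in> orbit \<pi> z\<close> ny Ox_def by simp
  qed
  have "card (orbs (\<pi> \<circ> tr x y) D) = card (orbs \<pi> D - {Ox, Oy}) + 1"
    unfolding eq using notin finite_orbs[OF fin] by simp
  also have "card (orbs \<pi> D - {Ox, Oy}) = card (orbs \<pi> D) - 2"
    using inO ne finite_orbs[OF fin] by (simp add: card_Diff_subset)
  moreover have "card {Ox, Oy} \<le> card (orbs \<pi> D)"
    by (rule card_mono) (use inO finite_orbs[OF fin] in auto)
  moreover have "card {Ox, Oy} = 2" using ne by simp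
  ultimately show ?thesis by linarith
qed

lemma bound:
  assumes pm: "pm \<pi> D" and xD: "x \<in> D" and yD: "y \<in> D"
  shows "card (orbs (\<pi> \<circ> tr x y) D) \<le> card (orbs \<pi> D) + 1"
proof -
  define \<pi>' where "\<pi>' = \<pi> \<circ> tr x y"
  have pm': "pm \<pi>' D" unfolding \<pi>'_def using pm_tr[OF pm xD yD] .
  have hback: "\<pi>' \<circ> tr x y = \<pi>" unfolding \<pi>'_def by (rule tr_tr)
  have fin: "finite D" using pm by (simp add: pm_def)
  have sub: "orbs \<pi>' D \<subseteq> (orbs \<pi> D - {orbit \<pi> x}) \<union> {orbit \<pi>' x, orbit \<pi>' y}"
  proof
    fix Q assume "Q \<in> orbs \<pi>' D"
    then obtain z where zD: "z \<in> D" and Q: "Q = orbit \<pi>' z" by (auto simp: orbs_def)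
    show "Q \<in> (orbs \<pi> D - {orbit \<pi> x}) \<union> {orbit \<pi>' x, orbit \<pi>' y}"
    proof (cases "x \<in> orbit \<pi>' z \<or> y \<in> orbit \<pi>' z")
      case True
      then show ?thesis using Q orbit_eq2[OF pm' zD xD _ orbit_self] orbit_eq2[OF pm' zD yD _ orbit_self]
        by blast
    next
      case False
      then have "orbit (\<pi>' \<circ> tr x y) z = orbit \<pi>' z" using unaffected by metis
      then have e: "orbit \<pi> z = Q" using hback Q by simp
      then have "Q \<noteq> orbit \<pi> x" using False Q orbit_self[of x \<pi>] by auto
      then show ?thesis using e zD by (auto simp: orbs_def)
    qed
  qed
  have "card (orbs \<pi>' D) \<le> card ((orbs \<pi> D - {orbit \<pi> x}) \<union> {orbit \<pi>' x, orbit \<pi>' y})"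
    by (rule card_mono[OF _ sub]) (use finite_orbs[OF fin] in auto)
  also have "\<dots> \<le> card (orbs \<pi> D - {orbit \<pi> x}) + card {orbit \<pi>' x, orbit \<pi>' y}"
    by (rule card_Un_le)
  also have "\<dots> \<le> card (orbs \<pi> D - {orbit \<pi> x}) + 2"
    by (simp add: card_insert_le_m1)
  also have "card (orbs \<pi> D - {orbit \<pi> x}) = card (orbs \<pi> D) - 1"
    using xD by (simp add: orbs_def)
  also have "card (orbs \<pi> D) \<ge> 1" using xD finite_orbs[OF fin]
    by (metis One_nat_def Suc_leI card_gt_0_iff empty_iff image_eqI orbs_def)
  ultimately show ?thesis unfolding \<pi>'_def by linarith
qed



definition symc :: "('a \<Rightarrow> 'a \<Rightarrow> bool) \<Rightarrow> 'a \<Rightarrow> 'a \<Rightarrow> bool" where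
  "symc R a b \<longleftrightarrow> R a b \<or> R b a"

definition cc :: "('a \<Rightarrow> 'a \<Rightarrow> bool) \<Rightarrow> 'a \<Rightarrow> 'a set" where
  "cc R z = {w. (symc R)\<^sup>*\<^sup>* z w}"

definition ncomp :: "('a \<Rightarrow> 'a \<Rightarrow> bool) \<Rightarrow> 'a set \<Rightarrow> nat" where
  "ncomp R D = card (cc R ` D)"

definition Rab :: "('a \<Rightarrow> 'a) \<Rightarrow> ('a \<Rightarrow> 'a) \<Rightarrow> 'a set \<Rightarrow> 'a \<Rightarrow> 'a \<Rightarrow> bool" where
  "Rab \<alpha> \<beta> D a b \<longleftrightarrow> a \<in> D \<and> (b = \<alpha> a \<or> b = \<beta> a)"

lemma symc_sym: "(symc R)\<^sup>*\<^sup>* a b \<Longrightarrow> (symc R)\<^sup>*\<^sup>* b a"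
proof (induction rule: rtranclp_induct)
  case base then show ?case by simp
next
  case (step y z)
  then have "symc R z y" by (auto simp: symc_def)
  then show ?case using step.IH by (meson converse_rtranclp_into_rtranclp)
qed

lemma symc_edge: "R a b \<Longrightarrow> (symc R)\<^sup>*\<^sup>* a b"
  by (auto simp: symc_def)

lemma cc_eq: assumes "(symc R)\<^sup>*\<^sup>* a b" shows "cc R a = cc R b"
proof -
  have ba: "(symc R)\<^sup>*\<^sup>* b a" using symc_sym[OF assms] .
  show ?thesis unfolding cc_def
  proof (intro set_eqI iffI; simp)
    fix w assume "(symc R)\<^sup>*\<^sup>* a w" then show "(symc R)\<^sup>*\<^sup>* b w" using ba by (rule rtranclp_trans[rotated])
  next
    fix w assume "(symc R)\<^sup>*\<^sup>* b w" then show "(symc R)\<^sup>*\<^sup>* a w" using assms by (rule rtranclp_trans[rotated])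
  qed
qed

lemma cc_self: "z \<in> cc R z"
  by (simp add: cc_def)

lemma card_factor:
  assumes "finite D" "\<And>z z'. z \<in> D \<Longrightarrow> z' \<in> D \<Longrightarrow> f z = f z' \<Longrightarrow> g z = g z'"
  shows "card (g ` D) \<le> card (f ` D)"
proof -
  define h where "h v = g (SOME z. z \<in> D \<and> f z = v)" for v
  have "g ` D \<subseteq> h ` (f ` D)"
  proof
    fix u assume "u \<in> g ` D"
    then obtain z where z: "z \<in> D" "u = g z" by auto
    have "\<exists>z'. z' \<in> D \<and> f z' = f z" using z by blast
    then have "(SOME z'. z' \<in> D \<and> f z' = f z) \<in> D \<and> f (SOME z'. z' \<in> D \<and> f z' = f z) = f z"
      by (rule someI_ex)
    then have "h (f z) = g z" unfolding h_def using assms(2) z(1) by metis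
    then show "u \<in> h ` (f ` D)" using z by force
  qed
  then have "card (g ` D) \<le> card (h ` (f ` D))"
    by (rule card_mono[rotated]) (use assms(1) in simp)
  also have "\<dots> \<le> card (f ` D)" by (rule card_image_le) (use assms(1) in simp)
  finally show ?thesis .
qed

lemma lift_rtc:
  assumes "\<And>a b. R1 a b \<Longrightarrow> (symc R2)\<^sup>*\<^sup>* a b"
  shows "(symc R1)\<^sup>*\<^sup>* a b \<Longrightarrow> (symc R2)\<^sup>*\<^sup>* a b"
proof (induction rule: rtranclp_induct)
  case base then show ?case by simp
next
  case (step y z)
  have "(symc R2)\<^sup>*\<^sup>* y z"
    using step.hyps(2) assms symc_sym unfolding symc_def[of R1] by metis
  then show ?case using step.IH rtranclp_trans by metis
qed

lemma ncomp_mono: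
  assumes "finite D" "\<And>a b. R1 a b \<Longrightarrow> (symc R2)\<^sup>*\<^sup>* a b"
  shows "ncomp R2 D \<le> ncomp R1 D"
  unfolding ncomp_def
proof (rule card_factor[OF assms(1)])
  fix z z' assume "cc R1 z = cc R1 z'"
  then have "z' \<in> cc R1 z" using cc_self[of z' R1] by simp
  then have "(symc R1)\<^sup>*\<^sup>* z z'" by (simp add: cc_def)
  then have "(symc R2)\<^sup>*\<^sup>* z z'" using lift_rtc[OF assms(2)] by blast
  then show "cc R2 z = cc R2 z'" by (rule cc_eq)
qed

lemma add_edge:
  assumes fin: "finite D" and xD: "x \<in> D"
  shows "ncomp R D \<le> ncomp (\<lambda>a b. R a b \<or> (a = x \<and> b = y)) D + 1"
proof -
  define R' where "R' = (\<lambda>a b. R a b \<or> (a = x \<and> b = y))"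
  define Wx where "Wx = cc R' x"
  have xy: "(symc R')\<^sup>*\<^sup>* x y" unfolding R'_def by (rule symc_edge) simp
  have a: "(symc R)\<^sup>*\<^sup>* z w" if "z \<notin> Wx" "(symc R')\<^sup>*\<^sup>* z w" for z w
    using that(2)
  proof (induction rule: rtranclp_induct)
    case base then show ?case by simp
  next
    case (step w w')
    have "w \<noteq> x"
    proof
      assume "w = x"
      then have "(symc R')\<^sup>*\<^sup>* x z" using step.hyps(1) symc_sym by metis
      then show False using that(1) by (simp add: Wx_def cc_def)
    qed
    moreover have "w \<noteq> y"
    proof
      assume "w = y"
      then have "(symc R')\<^sup>*\<^sup>* y z" using step.hyps(1) symc_sym by metis
      then have "(symc R')\<^sup>*\<^sup>* x z" using xy rtranclp_trans by metis
      then show False using that(1) by (simp add: Wx_def cc_def)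
    qed
    ultimately have "symc R w w'" using step.hyps(2) unfolding symc_def R'_def by auto
    then show ?case using step.IH by (meson rtranclp.rtrancl_into_rtrancl)
  qed
  have c: "(symc R)\<^sup>*\<^sup>* x w \<or> (symc R)\<^sup>*\<^sup>* y w" if "(symc R')\<^sup>*\<^sup>* x w" for w
    using that
  proof (induction rule: rtranclp_induct)
    case base then show ?case by simp
  next
    case (step w w')
    show ?case
    proof (cases "symc R w w'")
      case True then show ?thesis using step.IH by (meson rtranclp.rtrancl_into_rtrancl)
    next
      case False
      then have "w' = x \<or> w' = y" using step.hyps(2) unfolding symc_def R'_def by auto
      then show ?thesis by auto
    qed
  qed
  have s1: "cc R ` D \<subseteq> cc R ` (D - Wx) \<union> {cc R x, cc R y}"
  proof
    fix u assume "u \<in> cc R ` D"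
    then obtain z where z: "z \<in> D" "u = cc R z" by auto
    show "u \<in> cc R ` (D - Wx) \<union> {cc R x, cc R y}"
    proof (cases "z \<in> Wx")
      case True
      then have "(symc R')\<^sup>*\<^sup>* x z" by (simp add: Wx_def cc_def)
      then have "cc R z = cc R x \<or> cc R z = cc R y" using c cc_eq by metis
      then show ?thesis using z by auto
    next
      case False then show ?thesis using z by auto
    qed
  qed
  have s2: "card (cc R ` (D - Wx)) \<le> card (cc R' ` (D - Wx))"
  proof (rule card_factor)
    show "finite (D - Wx)" using fin by simp
    fix z z' assume zz: "z \<in> D - Wx" "z' \<in> D - Wx" "cc R' z = cc R' z'"
    then have "z' \<in> cc R' z" using cc_self[of z' R'] by simp
    then have "(symc R')\<^sup>*\<^sup>* z z'" by (simp add: cc_def)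
    then have "(symc R)\<^sup>*\<^sup>* z z'" using a zz(1) by blast
    then show "cc R z = cc R z'" by (rule cc_eq)
  qed
  have s3: "cc R' ` D = insert (cc R' x) (cc R' ` (D - Wx))"
  proof
    show "cc R' ` D \<subseteq> insert (cc R' x) (cc R' ` (D - Wx))"
    proof
      fix u assume "u \<in> cc R' ` D"
      then obtain z where z: "z \<in> D" "u = cc R' z" by auto
      show "u \<in> insert (cc R' x) (cc R' ` (D - Wx))"
      proof (cases "z \<in> Wx")
        case True
        then have "(symc R')\<^sup>*\<^sup>* x z" by (simp add: Wx_def cc_def)
        then have "cc R' x = cc R' z" by (rule cc_eq)
        then show ?thesis using z by simp
      next
        case False then show ?thesis using z by auto
      qed
    qed
  next
    show "insert (cc R' x) (cc R' ` (D - Wx)) \<subseteq> cc R' ` D" using xD by auto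
  qed
  have s4: "cc R' x \<notin> cc R' ` (D - Wx)"
  proof
    assume "cc R' x \<in> cc R' ` (D - Wx)"
    then obtain z where z: "z \<in> D - Wx" "cc R' x = cc R' z" by auto
    then have "z \<in> Wx" unfolding Wx_def using cc_self[of z R'] by simp
    then show False using z by simp
  qed
  have "card (cc R ` D) \<le> card (cc R ` (D - Wx) \<union> {cc R x, cc R y})"
    by (rule card_mono[OF _ s1]) (use fin in simp)
  also have "\<dots> \<le> card (cc R ` (D - Wx)) + card {cc R x, cc R y}" by (rule card_Un_le)
  also have "\<dots> \<le> card (cc R ` (D - Wx)) + 2" by (simp add: card_insert_le_m1)
  finally have "card (cc R ` D) \<le> card (cc R' ` (D - Wx)) + 2" using s2 by linarith
  moreover have "card (cc R' ` D) = card (cc R' ` (D - Wx)) + 1"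
    unfolding s3 using s4 fin by simp
  ultimately show ?thesis unfolding ncomp_def R'_def[symmetric] by linarith
qed

lemma pm_comp: "pm \<alpha> D \<Longrightarrow> pm \<beta> D \<Longrightarrow> pm (\<alpha> \<circ> \<beta>) D"
  unfolding pm_def by (auto simp: image_comp[symmetric] intro: comp_inj_on inj_on_subset)

lemma orbit_conn2:
  assumes "\<alpha> ` D \<subseteq> D" "\<beta> ` D \<subseteq> D" "z \<in> D" "w \<in> orbit (\<alpha> \<circ> \<beta>) z"
  shows "(symc (Rab \<alpha> \<beta> D))\<^sup>*\<^sup>* z w"
proof -
  define F where "F = \<alpha> \<circ> \<beta>"
  obtain n where n: "w = (F^^n) z" using assms(4) by (auto simp: orbit_iff F_def)
  have "(symc (Rab \<alpha> \<beta> D))\<^sup>*\<^sup>* z ((F^^n) z) \<and> (F^^n) z \<in> D"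
  proof (induction n)
    case 0 then show ?case using assms(3) by simp
  next
    case (Suc n)
    define u where "u = (F^^n) z"
    have u: "u \<in> D" "(symc (Rab \<alpha> \<beta> D))\<^sup>*\<^sup>* z u" using Suc u_def by auto
    have bu: "\<beta> u \<in> D" using u assms(2) by auto
    have "(symc (Rab \<alpha> \<beta> D))\<^sup>*\<^sup>* u (\<beta> u)" by (rule symc_edge) (simp add: Rab_def u)
    moreover have "(symc (Rab \<alpha> \<beta> D))\<^sup>*\<^sup>* (\<beta> u) (\<alpha> (\<beta> u))" by (rule symc_edge) (simp add: Rab_def bu)
    ultimately have "(symc (Rab \<alpha> \<beta> D))\<^sup>*\<^sup>* z (\<alpha> (\<beta> u))" using u(2) rtranclp_trans by metis
    moreover have "\<alpha> (\<beta> u) \<in> D" using bu assms(1) by auto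
    moreover have "(F^^Suc n) z = \<alpha> (\<beta> u)" by (simp add: u_def F_def)
    ultimately show ?case by simp
  qed
  then show ?thesis using n by simp
qed

lemma orbit_single: "f z = z \<Longrightarrow> orbit f z = {z}"
  using orbit_sub[of z "{z}" f] orbit_self[of z f] by auto



lemma L_base:
  assumes pa: "pm \<alpha> D" and pb: "pm \<beta> D" and hfix: "\<forall>z\<in>D. \<beta> z = z"
  shows "card (orbs \<alpha> D) + card (orbs \<beta> D) + card (orbs (\<alpha> \<circ> \<beta>) D) \<le> card D + 2 * ncomp (Rab \<alpha> \<beta> D) D"
proof -
  have fin: "finite D" and sa: "\<alpha> ` D \<subseteq> D" using pa by (auto simp: pm_def)
  have "orbs \<beta> D = (\<lambda>z. {z}) ` D" unfolding orbs_def
    by (rule image_cong[OF refl]) (simp add: hfix orbit_single)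
  then have cb: "card (orbs \<beta> D) = card D" by (simp add: card_image)
  have "orbit (\<alpha> \<circ> \<beta>) z = orbit \<alpha> z" if "z \<in> D" for z
    by (rule orbit_cong[where S=D]) (use that hfix sa in auto)
  then have cab: "orbs (\<alpha> \<circ> \<beta>) D = orbs \<alpha> D" unfolding orbs_def by auto
  define R where "R = Rab \<alpha> \<beta> D"
  have inorb: "w \<in> orbit \<alpha> z" if "z \<in> D" "(symc R)\<^sup>*\<^sup>* z w" for z w
    using that(2)
  proof (induction rule: rtranclp_induct)
    case base then show ?case by (rule orbit_self)
  next
    case (step w w')
    show ?case
    proof (cases "R w w'")
      case True
      then have "w' = \<alpha> w \<or> w' = w" using hfix unfolding R_def Rab_def by auto
      then show ?thesis using step.IH orbit_step by metis
    next
      case False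
      then have "R w' w" using step.hyps(2) by (simp add: symc_def)
      then have w'D: "w' \<in> D" and wor: "w = \<alpha> w' \<or> w = w'" using hfix unfolding R_def Rab_def by auto
      from wor show ?thesis
      proof
        assume "w = \<alpha> w'"
        then have "w' \<in> orbit \<alpha> w" using cyc[OF pa w'D] by simp
        then show ?thesis using orbit_trans[OF step.IH] by blast
      next
        assume "w = w'" then show ?thesis using step.IH by simp
      qed
    qed
  qed
  have "card (orbs \<alpha> D) \<le> ncomp R D"
    unfolding orbs_def ncomp_def
  proof (rule card_factor[OF fin])
    fix z z' assume zz: "z \<in> D" "z' \<in> D" "cc R z = cc R z'"
    then have "z' \<in> cc R z" using cc_self[of z' R] by simp
    then have "(symc R)\<^sup>*\<^sup>* z z'" by (simp add: cc_def)
    then have "z' \<in> orbit \<alpha> z" using inorb zz by blast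
    then show "orbit \<alpha> z = orbit \<alpha> z'" using orbit_eq[OF pa zz(1)] by simp
  qed
  then show ?thesis using cb cab unfolding R_def by simp
qed

lemma L_gen:
  assumes "pm \<alpha> D" "pm \<beta> D"
  shows "card (orbs \<alpha> D) + card (orbs \<beta> D) + card (orbs (\<alpha> \<circ> \<beta>) D) \<le> card D + 2 * ncomp (Rab \<alpha> \<beta> D) D"
  using assms
proof (induction "card {z\<in>D. \<beta> z \<noteq> z}" arbitrary: \<beta> rule: less_induct)
  case less
  note pa = less.prems(1) and pb = less.prems(2)
  have fin: "finite D" and sa: "\<alpha> ` D \<subseteq> D" and sb: "\<beta> ` D \<subseteq> D" and ib: "inj_on \<beta> D"
    using pa pb by (auto simp: pm_def)
  show ?case
  proof (cases "\<forall>z\<in>D. \<beta> z = z")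
    case True then show ?thesis using L_base[OF pa pb] by blast
  next
    case False
    then obtain x where xD: "x \<in> D" and bx: "\<beta> x \<noteq> x" by blast
    define y where "y = \<beta> x"
    have yD: "y \<in> D" using xD sb y_def by auto
    have yx: "y \<noteq> x" using bx y_def by simp
    define \<beta>' where "\<beta>' = \<beta> \<circ> tr x y"
    have pb': "pm \<beta>' D" unfolding \<beta>'_def by (rule pm_tr[OF pb xD yD])
    have bb: "\<beta>' \<circ> tr x y = \<beta>" unfolding \<beta>'_def by (rule tr_tr)
    have b'y: "\<beta>' y = y" unfolding \<beta>'_def tr_def using yx y_def by simp
    have b'x: "\<beta>' x = \<beta> y" unfolding \<beta>'_def tr_def by simp
    have b'o: "\<beta>' z = \<beta> z" if "z \<noteq> x" "z \<noteq> y" for z unfolding \<beta>'_def tr_def using that by simp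
    have by_: "\<beta> y \<noteq> y"
    proof
      assume "\<beta> y = y"
      then have "\<beta> y = \<beta> x" using y_def by simp
      then show False using ib xD yD yx by (meson inj_onD)
    qed
    have sub: "{z\<in>D. \<beta>' z \<noteq> z} \<subset> {z\<in>D. \<beta> z \<noteq> z}"
    proof
      show "{z\<in>D. \<beta>' z \<noteq> z} \<subseteq> {z\<in>D. \<beta> z \<noteq> z}"
        using b'o b'y bx by (auto, metis)
      show "{z\<in>D. \<beta>' z \<noteq> z} \<noteq> {z\<in>D. \<beta> z \<noteq> z}" using yD by_ b'y by blast
    qed
    have lt: "card {z\<in>D. \<beta>' z \<noteq> z} < card {z\<in>D. \<beta> z \<noteq> z}"
      by (rule psubset_card_mono[OF _ sub]) (use fin in simp)
    have IH: "card (orbs \<alpha> D) + card (orbs \<beta>' D) + card (orbs (\<alpha> \<circ> \<beta>') D) \<le> card D + 2 * ncomp (Rab \<alpha> \<beta>' D) D"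
      using less.hyps[OF lt pa pb'] .
    have ny: "y \<notin> orbit \<beta>' x"
    proof
      assume "y \<in> orbit \<beta>' x"
      then have "x \<in> orbit \<beta>' y" using orbit_sym[OF pb' xD] by blast
      then show False using orbit_single[of \<beta>' y, OF b'y] yx by simp
    qed
    have F1: "card (orbs \<beta> D) + 1 = card (orbs \<beta>' D)" using merge[OF pb' xD yD ny] bb by simp
    have pab': "pm (\<alpha> \<circ> \<beta>') D" by (rule pm_comp[OF pa pb'])
    have ab: "(\<alpha> \<circ> \<beta>') \<circ> tr x y = \<alpha> \<circ> \<beta>" using bb by (simp add: comp_assoc)
    have sb': "\<beta>' ` D \<subseteq> D" using pb' by (simp add: pm_def)
    show ?thesis
    proof (cases "y \<in> orbit (\<alpha> \<circ> \<beta>') x")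
      case False
      have F2: "card (orbs (\<alpha> \<circ> \<beta>) D) + 1 = card (orbs (\<alpha> \<circ> \<beta>') D)"
        using merge[OF pab' xD yD False] ab by simp
      define R' where "R' = (\<lambda>a b. Rab \<alpha> \<beta>' D a b \<or> (a = x \<and> b = y))"
      have "ncomp (Rab \<alpha> \<beta>' D) D \<le> ncomp R' D + 1"
        unfolding R'_def by (rule add_edge[OF fin xD])
      moreover have "ncomp R' D \<le> ncomp (Rab \<alpha> \<beta> D) D"
      proof (rule ncomp_mono[OF fin])
        fix a b assume "Rab \<alpha> \<beta> D a b"
        then consider (al) "a \<in> D" "b = \<alpha> a" | (be) "a \<in> D" "b = \<beta> a"
          unfolding Rab_def by auto
        then show "(symc R')\<^sup>*\<^sup>* a b"
        proof cases
          case al then show ?thesis by (intro symc_edge) (simp add: R'_def Rab_def)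
        next
          case be
          consider (cx) "a = x" | (cy) "a = y" | (co) "a \<noteq> x" "a \<noteq> y" by blast
          then show ?thesis
          proof cases
            case cx then show ?thesis using be y_def by (intro symc_edge) (simp add: R'_def)
          next
            case cy
            have "(symc R')\<^sup>*\<^sup>* x y" by (intro symc_edge) (simp add: R'_def)
            then have "(symc R')\<^sup>*\<^sup>* y x" by (rule symc_sym)
            moreover have "(symc R')\<^sup>*\<^sup>* x (\<beta>' x)" using xD by (intro symc_edge) (simp add: R'_def Rab_def)
            ultimately show ?thesis using cy be b'x by (metis rtranclp_trans)
          next
            case co then show ?thesis using be b'o by (intro symc_edge) (simp add: R'_def Rab_def)
          qed
        qed
      qed
      ultimately show ?thesis using IH F1 F2 by linarith
    next
      case True
      have F2: "card (orbs (\<alpha> \<circ> \<beta>) D) \<le> card (orbs (\<alpha> \<circ> \<beta>') D) + 1"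
        using bound[OF pab' xD yD] ab by simp
      have xy': "(symc (Rab \<alpha> \<beta>' D))\<^sup>*\<^sup>* x y" by (rule orbit_conn2[OF sa sb' xD True])
      have "ncomp (Rab \<alpha> \<beta>' D) D \<le> ncomp (Rab \<alpha> \<beta> D) D"
      proof (rule ncomp_mono[OF fin])
        fix a b assume "Rab \<alpha> \<beta> D a b"
        then consider (al) "a \<in> D" "b = \<alpha> a" | (be) "a \<in> D" "b = \<beta> a" unfolding Rab_def by auto
        then show "(symc (Rab \<alpha> \<beta>' D))\<^sup>*\<^sup>* a b"
        proof cases
          case al then show ?thesis by (intro symc_edge) (simp add: Rab_def)
        next
          case be
          consider (cx) "a = x" | (cy) "a = y" | (co) "a \<noteq> x" "a \<noteq> y" by blast
          then show ?thesis
          proof cases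
            case cx then show ?thesis using be xy' y_def by simp
          next
            case cy
            have "(symc (Rab \<alpha> \<beta>' D))\<^sup>*\<^sup>* x (\<beta>' x)" using xD by (intro symc_edge) (simp add: Rab_def)
            then have "(symc (Rab \<alpha> \<beta>' D))\<^sup>*\<^sup>* y (\<beta>' x)" using symc_sym[OF xy'] by (metis rtranclp_trans)
            then show ?thesis using be cy b'x by simp
          next
            case co then show ?thesis using be b'o by (intro symc_edge) (simp add: Rab_def)
          qed
        qed
      qed
      then show ?thesis using IH F1 F2 by linarith
    qed
  qed
qed

lemma L_conn:
  assumes "pm \<alpha> D" "pm \<beta> D" "z0 \<in> D" "\<And>z. z \<in> D \<Longrightarrow> (symc (Rab \<alpha> \<beta> D))\<^sup>*\<^sup>* z0 z"
  shows "card (orbs \<alpha> D) + card (orbs \<beta> D) + card (orbs (\<alpha> \<circ> \<beta>) D) \<le> card D + 2"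
proof -
  have e: "cc (Rab \<alpha> \<beta> D) z = cc (Rab \<alpha> \<beta> D) z0" if "z \<in> D" for z
    using cc_eq[OF assms(4)[OF that]] by simp
  have "cc (Rab \<alpha> \<beta> D) ` D = {cc (Rab \<alpha> \<beta> D) z0}"
  proof
    show "cc (Rab \<alpha> \<beta> D) ` D \<subseteq> {cc (Rab \<alpha> \<beta> D) z0}" using e by (simp add: image_subset_iff)
    show "{cc (Rab \<alpha> \<beta> D) z0} \<subseteq> cc (Rab \<alpha> \<beta> D) ` D" using assms(3) by simp
  qed
  then have "ncomp (Rab \<alpha> \<beta> D) D = 1" unfolding ncomp_def by simp
  then show ?thesis using L_gen[OF assms(1,2)] by simp
qed



definition nx :: "'v list \<Rightarrow> nat \<Rightarrow> nat" where
  "nx C i = (i + 1) mod length C"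

definition pv :: "'v list \<Rightarrow> nat \<Rightarrow> nat" where
  "pv C i = (i + length C - 1) mod length C"

definition fw :: "'v list \<Rightarrow> nat \<Rightarrow> 'v \<times> 'v" where
  "fw C i = (C ! i, C ! nx C i)"

definition bw :: "'v list \<Rightarrow> nat \<Rightarrow> 'v \<times> 'v" where
  "bw C i = (C ! nx C i, C ! i)"

lemma nx_alt: "i < length C \<Longrightarrow> nx C i = (if i + 1 = length C then 0 else i + 1)"
  unfolding nx_def by auto

lemma pv_alt: assumes "i < length C" shows "pv C i = (if i = 0 then length C - 1 else i - 1)"
proof (cases "i = 0")
  case True then show ?thesis using assms by (simp add: pv_def)
next
  case False
  then have e: "i + length C - 1 = (i - 1) + length C" by simp
  have "(i + length C - 1) mod length C = ((i - 1) + length C) mod length C" by (simp only: e)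
  also have "\<dots> = (i - 1) mod length C" by simp
  also have "\<dots> = i - 1" using assms by simp
  finally show ?thesis using False by (simp add: pv_def)
qed

lemma len_pos: "i < length C \<Longrightarrow> 0 < length C"
  by (cases C) auto

lemma nx_lt: assumes "i < length C" shows "nx C i < length C"
  using nx_alt[OF assms] len_pos[OF assms] assms by (cases "i + 1 = length C") auto

lemma pv_lt: assumes "i < length C" shows "pv C i < length C"
  using pv_alt[OF assms] len_pos[OF assms] assms by (cases "i = 0") auto

lemma pv_nx: assumes "i < length C" shows "pv C (nx C i) = i"
proof (cases "i + 1 = length C")
  case True
  then have "nx C i = 0" using nx_alt[OF assms] by simp
  then show ?thesis using pv_alt[OF nx_lt[OF assms]] True by simp
next
  case False
  then have "nx C i = i + 1" using nx_alt[OF assms] by simp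
  then show ?thesis using pv_alt[OF nx_lt[OF assms]] by simp
qed

lemma nx_pv: assumes "i < length C" shows "nx C (pv C i) = i"
proof (cases "i = 0")
  case True
  then have "pv C i = length C - 1" using pv_alt[OF assms] by simp
  then show ?thesis using nx_alt[OF pv_lt[OF assms]] True len_pos[OF assms] by simp
next
  case False
  then have "pv C i = i - 1" using pv_alt[OF assms] by simp
  then show ?thesis using nx_alt[OF pv_lt[OF assms]] False assms by simp
qed

lemma nx_ne_pv: assumes "i < length C" "length C \<ge> 3" shows "nx C i \<noteq> pv C i"
  using nx_alt[OF assms(1)] pv_alt[OF assms(1)] assms by (cases "i = 0"; cases "i + 1 = length C") auto

lemma nx_ne: assumes "i < length C" "length C \<ge> 3" shows "nx C i \<noteq> i"
  using nx_alt[OF assms(1)] assms by (cases "i + 1 = length C") auto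

lemma nx_nx_ne: assumes "i < length C" "length C \<ge> 3" shows "nx C (nx C i) \<noteq> i"
proof (cases "i + 1 = length C")
  case True
  then have "nx C i = 0" using nx_alt[OF assms(1)] by simp
  then have "nx C (nx C i) = 1" using nx_alt[OF nx_lt[OF assms(1)]] assms(2) by simp
  then show ?thesis using True assms(2) by simp
next
  case False
  then have a: "nx C i = i + 1" using nx_alt[OF assms(1)] by simp
  show ?thesis using nx_alt[OF nx_lt[OF assms(1)]] unfolding a using assms(2) by auto
qed

lemma nx_mod: "i < length C \<Longrightarrow> nx C (k mod length C) = (k + 1) mod length C"
  unfolding nx_def by (simp add: mod_Suc_eq)

lemma cyclic_induct:
  assumes "i0 < length C" "P i0" "\<And>j. j < length C \<Longrightarrow> P j \<Longrightarrow> P (nx C j)" "j < length C"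
  shows "P j"
proof -
  have n0: "length C > 0" using len_pos[OF assms(1)] .
  have "P ((i0 + k) mod length C)" for k
  proof (induction k)
    case 0 then show ?case using assms(1,2) by simp
  next
    case (Suc k)
    have "nx C ((i0 + k) mod length C) = (i0 + Suc k) mod length C"
      unfolding nx_def by (simp add: mod_Suc_eq)
    then show ?case using assms(3)[OF _ Suc] n0 by (metis mod_less_divisor)
  qed
  moreover have "(i0 + ((length C - i0) + j)) mod length C = j" using assms(1,4) by simp
  ultimately show ?thesis by metis
qed

locale cutting =
  fixes V :: "'v set" and E :: "'v \<Rightarrow> 'v \<Rightarrow> bool" and \<rho> :: "'v \<times> 'v \<Rightarrow> 'v \<times> 'v"
    and Cs :: "'v list set"
  assumes cg: "connected_graph V E" and rs: "rotation_system V E \<rho>"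
    and pf: "peripheral_family V E Cs" and nf: "\<forall>C\<in>Cs. \<not> facial E \<rho> C" and Cne: "Cs \<noteq> {}"
begin

abbreviation "D \<equiv> darts E"

definition X :: "('v \<times> 'v) set" where
  "X = (\<Union>C\<in>Cs. fw C ` {..<length C} \<union> bw C ` {..<length C})"

definition CV :: "'v set" where
  "CV = (\<Union>C\<in>Cs. set C)"

definition oth :: "'v \<times> 'v \<Rightarrow> 'v \<times> 'v" where
  "oth e = (SOME e'. e' \<in> X \<and> fst e' = fst e \<and> e' \<noteq> e)"

definition av :: "'v \<Rightarrow> 'v \<times> 'v" where
  "av v = (SOME e. e \<in> X \<and> fst e = v)"

lemma sg: "simple_graph V E" using cg by (simp add: connected_graph_def)

lemma Eprops: "E u v \<Longrightarrow> u \<in> V \<and> v \<in> V \<and> u \<noteq> v \<and> E v u"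
  using sg unfolding simple_graph_def by blast

lemma finV: "finite V" using sg by (simp add: simple_graph_def)

lemma darts_iff: "d \<in> D \<longleftrightarrow> E (fst d) (snd d)"
  unfolding darts_def by (cases d) auto

lemma finD: "finite D"
proof -
  have "D \<subseteq> V \<times> V" using Eprops darts_iff by fastforce
  then show ?thesis using finV finite_subset by blast
qed

lemma rev_in: "d \<in> D \<Longrightarrow> rev_dart d \<in> D"
  using Eprops darts_iff by (simp add: rev_dart_def)

lemma rev_rev: "rev_dart (rev_dart d) = d"
  by (simp add: rev_dart_def)

lemma rev_ne: "d \<in> D \<Longrightarrow> rev_dart d \<noteq> d"
  using Eprops darts_iff by (cases d) (auto simp: rev_dart_def)

lemma rho_bij: "bij_betw \<rho> D D" using rs by (simp add: rotation_system_def)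

lemma rho_fst: "d \<in> D \<Longrightarrow> fst (\<rho> d) = fst d" using rs by (simp add: rotation_system_def)

lemma rho_in: "d \<in> D \<Longrightarrow> \<rho> d \<in> D" by (rule bij_betw_apply[OF rho_bij])

lemma rho_trans: "d \<in> D \<Longrightarrow> d' \<in> D \<Longrightarrow> fst d = fst d' \<Longrightarrow> d' \<in> orbit \<rho> d"
  using rs unfolding rotation_system_def orbit_iff by metis

lemma pm_rho: "pm \<rho> D"
  unfolding pm_def using finD rho_bij bij_betw_imp_inj_on bij_betw_imp_surj_on by blast

lemma pm_rev: "pm rev_dart D"
proof -
  have "inj_on rev_dart D" by (metis inj_onI rev_rev)
  then show ?thesis unfolding pm_def using finD rev_in by blast
qed

lemma pm_fp: "pm (face_perm \<rho>) D"
  unfolding face_perm_def by (rule pm_comp[OF pm_rho pm_rev])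

lemma cyc_of: "C \<in> Cs \<Longrightarrow> is_cycle V E C"
  using pf unfolding peripheral_family_def peripheral_cycle_def induced_cycle_def by blast

lemma len3: "C \<in> Cs \<Longrightarrow> length C \<ge> 3"
  using cyc_of is_cycle_def by blast

lemma dist: "C \<in> Cs \<Longrightarrow> distinct C"
  using cyc_of is_cycle_def by blast

lemma disj: "C \<in> Cs \<Longrightarrow> C' \<in> Cs \<Longrightarrow> C \<noteq> C' \<Longrightarrow> set C \<inter> set C' = {}"
  using pf unfolding peripheral_family_def by blast

lemma nonadj: "C \<in> Cs \<Longrightarrow> C' \<in> Cs \<Longrightarrow> C \<noteq> C' \<Longrightarrow> u \<in> set C \<Longrightarrow> v \<in> set C' \<Longrightarrow> \<not> E u v"
  using pf unfolding peripheral_family_def by blast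

lemma induced: "C \<in> Cs \<Longrightarrow> u \<in> set C \<Longrightarrow> v \<in> set C \<Longrightarrow> E u v \<Longrightarrow>
    (u, v) \<in> cyc_darts C \<or> (v, u) \<in> cyc_darts C"
  using pf unfolding peripheral_family_def peripheral_cycle_def induced_cycle_def by blast

lemma rest_conn: "connected_set E (V - CV)"
  using pf unfolding peripheral_family_def CV_def by blast

lemma fw_D: "C \<in> Cs \<Longrightarrow> i < length C \<Longrightarrow> fw C i \<in> D"
  using cyc_of unfolding is_cycle_def darts_iff fw_def nx_def by auto

lemma bw_D: "C \<in> Cs \<Longrightarrow> i < length C \<Longrightarrow> bw C i \<in> D"
  using fw_D Eprops unfolding darts_iff fw_def bw_def by auto

lemma rev_fw: "rev_dart (fw C i) = bw C i" by (simp add: rev_dart_def fw_def bw_def)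
lemma rev_bw: "rev_dart (bw C i) = fw C i" by (simp add: rev_dart_def fw_def bw_def)

lemma fst_fw: "fst (fw C i) = C ! i" by (simp add: fw_def)
lemma fst_bw: "fst (bw C i) = C ! nx C i" by (simp add: bw_def)

lemma cyc_darts_fw: "cyc_darts C = fw C ` {..<length C}"
  unfolding cyc_darts_def fw_def nx_def by auto

lemma X_cases: "e \<in> X \<Longrightarrow> \<exists>C\<in>Cs. \<exists>i<length C. e = fw C i \<or> e = bw C i"
  unfolding X_def by auto

lemma fw_X: "C \<in> Cs \<Longrightarrow> i < length C \<Longrightarrow> fw C i \<in> X" unfolding X_def by auto
lemma bw_X: "C \<in> Cs \<Longrightarrow> i < length C \<Longrightarrow> bw C i \<in> X" unfolding X_def by auto

lemma X_D: "e \<in> X \<Longrightarrow> e \<in> D"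
  using X_cases fw_D bw_D by blast

lemma fst_X: "e \<in> X \<Longrightarrow> \<exists>C\<in>Cs. fst e \<in> set C"
  using X_cases fst_fw fst_bw nx_lt by (metis nth_mem)

lemma fst_X_CV: "e \<in> X \<Longrightarrow> fst e \<in> CV"
  using fst_X CV_def by blast

lemma rev_X: "e \<in> X \<Longrightarrow> rev_dart e \<in> X"
  using X_cases rev_fw rev_bw fw_X bw_X by metis

lemma rev_X_iff: "rev_dart e \<in> X \<longleftrightarrow> e \<in> X"
  using rev_X rev_rev by metis

lemma xat:
  assumes C: "C \<in> Cs" and j: "j < length C" and e: "e \<in> X" and fe: "fst e = C ! j"
  shows "e = fw C j \<or> e = bw C (pv C j)"
proof -
  obtain C' i where C': "C' \<in> Cs" "i < length C'" and ei: "e = fw C' i \<or> e = bw C' i"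
    using X_cases[OF e] by blast
  have "fst e \<in> set C'" using ei C'(2) fst_fw fst_bw nx_lt by (metis nth_mem)
  moreover have "fst e \<in> set C" using fe j by simp
  ultimately have CC: "C' = C" using disj C C'(1) by blast
  show ?thesis using ei
  proof
    assume "e = fw C' i"
    then have "C ! i = C ! j" using fe CC by (simp add: fst_fw)
    then have "i = j" using dist[OF C] C'(2) j CC nth_eq_iff_index_eq by metis
    then show ?thesis using \<open>e = fw C' i\<close> CC by simp
  next
    assume "e = bw C' i"
    then have "C ! nx C i = C ! j" using fe CC by (simp add: fst_bw)
    then have "nx C i = j" using dist[OF C] C'(2) j CC nth_eq_iff_index_eq nx_lt by metis
    then have "i = pv C j" using pv_nx C'(2) CC by metis
    then show ?thesis using \<open>e = bw C' i\<close> CC by simp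
  qed
qed

lemma fw_ne_bw: assumes "C \<in> Cs" "i < length C" "i' < length C" shows "fw C i \<noteq> bw C i'"
proof
  assume "fw C i = bw C i'"
  then have a: "C ! i = C ! nx C i'" and b: "C ! nx C i = C ! i'" by (auto simp: fw_def bw_def)
  have "i = nx C i'" using a dist[OF assms(1)] assms nx_lt nth_eq_iff_index_eq by metis
  moreover have "nx C i = i'" using b dist[OF assms(1)] assms nx_lt nth_eq_iff_index_eq by metis
  ultimately show False using nx_nx_ne[OF assms(3) len3[OF assms(1)]] by simp
qed

lemma oth_fw: assumes C: "C \<in> Cs" and j: "j < length C" shows "oth (fw C j) = bw C (pv C j)"
  unfolding oth_def
proof (rule some_equality)
  show "bw C (pv C j) \<in> X \<and> fst (bw C (pv C j)) = fst (fw C j) \<and> bw C (pv C j) \<noteq> fw C j"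
    using bw_X[OF C pv_lt[OF j]] fst_bw fst_fw nx_pv[OF j] fw_ne_bw[OF C j pv_lt[OF j]] by metis
  fix e assume "e \<in> X \<and> fst e = fst (fw C j) \<and> e \<noteq> fw C j"
  then show "e = bw C (pv C j)" using xat[OF C j] fst_fw by metis
qed

lemma oth_bw: assumes C: "C \<in> Cs" and i: "i < length C" shows "oth (bw C i) = fw C (nx C i)"
  unfolding oth_def
proof (rule some_equality)
  show "fw C (nx C i) \<in> X \<and> fst (fw C (nx C i)) = fst (bw C i) \<and> fw C (nx C i) \<noteq> bw C i"
    using fw_X[OF C nx_lt[OF i]] fst_bw fst_fw fw_ne_bw[OF C nx_lt[OF i] i] by metis
  fix e assume h: "e \<in> X \<and> fst e = fst (bw C i) \<and> e \<noteq> bw C i"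
  then have "e = fw C (nx C i) \<or> e = bw C (pv C (nx C i))"
    using xat[OF C nx_lt[OF i]] fst_bw by metis
  then show "e = fw C (nx C i)" using h pv_nx[OF i] by auto
qed

lemma oth_props:
  assumes e: "e \<in> X"
  shows "oth e \<in> X" "fst (oth e) = fst e" "oth e \<noteq> e" "oth (oth e) = e"
    "\<And>e'. e' \<in> X \<Longrightarrow> fst e' = fst e \<Longrightarrow> e' = e \<or> e' = oth e"
proof -
  obtain C i where C: "C \<in> Cs" "i < length C" and ei: "e = fw C i \<or> e = bw C i"
    using X_cases[OF e] by blast
  show "oth e \<in> X" "fst (oth e) = fst e" "oth e \<noteq> e" "oth (oth e) = e"
    using ei oth_fw[OF C] oth_bw[OF C] fw_X[OF C(1)] bw_X[OF C(1)] pv_lt[OF C(2)] nx_lt[OF C(2)]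
      fst_fw fst_bw nx_pv[OF C(2)] pv_nx[OF C(2)] fw_ne_bw[OF C(1)] C(2)
      oth_fw[OF C(1) nx_lt[OF C(2)]] oth_bw[OF C(1) pv_lt[OF C(2)]]
    by (metis)+
  fix e' assume e': "e' \<in> X" "fst e' = fst e"
  show "e' = e \<or> e' = oth e" using ei
  proof
    assume h: "e = fw C i"
    then show ?thesis using xat[OF C e'(1)] e'(2) fst_fw oth_fw[OF C] by metis
  next
    assume h: "e = bw C i"
    then have "fst e' = C ! nx C i" using e'(2) fst_bw by simp
    then have "e' = fw C (nx C i) \<or> e' = bw C (pv C (nx C i))"
      using xat[OF C(1) nx_lt[OF C(2)] e'(1)] by simp
    then show ?thesis using h oth_bw[OF C] pv_nx[OF C(2)] by auto
  qed
qed

lemma av_props: assumes "v \<in> CV" shows "av v \<in> X" "fst (av v) = v"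
proof -
  obtain C where C: "C \<in> Cs" "v \<in> set C" using assms CV_def by blast
  then obtain j where j: "j < length C" "v = C ! j" by (metis in_set_conv_nth)
  have "\<exists>e. e \<in> X \<and> fst e = v" using fw_X[OF C(1) j(1)] fst_fw j(2) by metis
  then have "av v \<in> X \<and> fst (av v) = v" unfolding av_def by (rule someI_ex)
  then show "av v \<in> X" "fst (av v) = v" by auto
qed

lemma nonX_snd:
  assumes d: "d \<in> D" "d \<notin> X" and f: "fst d \<in> CV"
  shows "snd d \<in> V - CV"
proof -
  have Ed: "E (fst d) (snd d)" using d darts_iff by blast
  obtain C where C: "C \<in> Cs" "fst d \<in> set C" using f CV_def by blast
  have "snd d \<notin> CV"
  proof
    assume "snd d \<in> CV"
    then obtain C' where C': "C' \<in> Cs" "snd d \<in> set C'" using CV_def by blast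
    show False
    proof (cases "C' = C")
      case False then show False using nonadj[OF C(1) C'(1) _ C(2) C'(2)] Ed by metis
    next
      case True
      then have "(fst d, snd d) \<in> cyc_darts C \<or> (snd d, fst d) \<in> cyc_darts C"
        using induced[OF C(1) C(2) _ Ed] C'(2) by simp
      then show False
      proof
        assume "(fst d, snd d) \<in> cyc_darts C"
        then obtain i where "i < length C" "(fst d, snd d) = fw C i" using cyc_darts_fw by auto
        then have "d = fw C i" by simp
        then show False using d fw_X[OF C(1) \<open>i < length C\<close>] by simp
      next
        assume "(snd d, fst d) \<in> cyc_darts C"
        then obtain i where "i < length C" "(snd d, fst d) = fw C i" using cyc_darts_fw by auto
        then have "d = bw C i" by (cases d) (simp add: fw_def bw_def)
        then show False using d bw_X[OF C(1) \<open>i < length C\<close>] by simp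
      qed
    qed
  qed
  moreover have "snd d \<in> V" using Ed Eprops by blast
  ultimately show ?thesis by simp
qed

lemma rho_ne_X: assumes "e \<in> X" shows "\<rho> e \<noteq> e"
proof
  assume h: "\<rho> e = e"
  have "oth e \<in> orbit \<rho> e"
    using rho_trans X_D assms oth_props(1,2)[OF assms] by metis
  then show False using orbit_single[of \<rho> e, OF h] oth_props(3)[OF assms] by simp
qed

lemma rho_X: assumes "e \<in> X" "\<rho> e \<in> X" shows "\<rho> e = oth e"
  using oth_props(5)[OF assms(1,2)] rho_fst[OF X_D[OF assms(1)]] rho_ne_X[OF assms(1)] by blast

end


definition seg :: "('a \<Rightarrow> 'a) \<Rightarrow> 'a \<Rightarrow> 'a \<Rightarrow> 'a set" where
  "seg f a b = {(f^^n) a | n. \<forall>m\<le>n. (f^^m) a \<noteq> b}"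

lemma seg_a: "a \<noteq> b \<Longrightarrow> a \<in> seg f a b"
  unfolding seg_def by (rule CollectI, rule exI[of _ 0]) simp

lemma seg_b: "b \<notin> seg f a b"
  unfolding seg_def by auto

lemma seg_step: assumes "d \<in> seg f a b" "f d \<noteq> b" shows "f d \<in> seg f a b"
proof -
  obtain n where n: "d = (f^^n) a" "\<forall>m\<le>n. (f^^m) a \<noteq> b" using assms(1) unfolding seg_def by auto
  have "\<forall>m\<le>Suc n. (f^^m) a \<noteq> b" using n assms(2) by (metis comp_apply funpow.simps(2) le_Suc_eq)
  moreover have "f d = (f^^Suc n) a" using n by simp
  ultimately show ?thesis unfolding seg_def by blast
qed

lemma seg_back:
  assumes pm: "pm f D" and aD: "a \<in> D" and dD: "d \<in> D" and fd: "f d \<in> seg f a b" and na: "f d \<noteq> a"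
  shows "d \<in> seg f a b"
proof -
  have sub: "f ` D \<subseteq> D" and inj: "inj_on f D" using pm by (auto simp: pm_def)
  obtain n where n: "f d = (f^^n) a" "\<forall>m\<le>n. (f^^m) a \<noteq> b" using fd unfolding seg_def by auto
  obtain k where k: "n = Suc k" using n(1) na by (cases n) auto
  have "f d = f ((f^^k) a)" using n(1) k by simp
  moreover have "(f^^k) a \<in> D" using funpow_in[OF sub aD] .
  ultimately have "d = (f^^k) a" using inj dD by (meson inj_onD)
  moreover have "\<forall>m\<le>k. (f^^m) a \<noteq> b" using n(2) k by simp
  ultimately show ?thesis unfolding seg_def by blast
qed

lemma seg_pre_b:
  assumes pm: "pm f D" and aD: "a \<in> D" and dD: "d \<in> D" and bo: "b \<in> orbit f a" and ba: "b \<noteq> a"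
    and fd: "f d = b"
  shows "d \<in> seg f a b"
proof -
  have sub: "f ` D \<subseteq> D" and inj: "inj_on f D" using pm by (auto simp: pm_def)
  obtain M where M: "b = (f^^M) a" using bo by (auto simp: orbit_iff)
  define N where "N = (LEAST N. (f^^N) a = b)"
  have N: "(f^^N) a = b" unfolding N_def by (rule LeastI[of _ M]) (use M in simp)
  have Nmin: "\<forall>m<N. (f^^m) a \<noteq> b" unfolding N_def using not_less_Least by blast
  obtain k where k: "N = Suc k" using N ba by (cases N) auto
  have "f d = f ((f^^k) a)" using N k fd by simp
  moreover have "(f^^k) a \<in> D" using funpow_in[OF sub aD] .
  ultimately have "d = (f^^k) a" using inj dD by (meson inj_onD)
  moreover have "\<forall>m\<le>k. (f^^m) a \<noteq> b" using Nmin k by simp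
  ultimately show ?thesis unfolding seg_def by blast
qed

lemma funpow_period: assumes "(f^^p) a = a" shows "(f^^M) a = (f^^(M mod p)) a"
proof -
  have q: "(f^^(q * p)) a = a" for q
  proof (induction q)
    case 0 then show ?case by simp
  next
    case (Suc q)
    have "(f^^(Suc q * p)) a = (f^^p) ((f^^(q * p)) a)" by (simp add: funpow_add)
    then show ?case using Suc assms by simp
  qed
  have "M = M mod p + (M div p) * p" by simp
  then have "(f^^M) a = (f^^(M mod p)) ((f^^((M div p) * p)) a)" by (metis funpow_add comp_apply)
  then show ?thesis using q by simp
qed

lemma seg_pre_a:
  assumes bo: "b \<in> orbit f a" and fd: "f d = a"
  shows "d \<notin> seg f a b"
proof
  assume "d \<in> seg f a b"
  then obtain n where n: "d = (f^^n) a" "\<forall>m\<le>n. (f^^m) a \<noteq> b" unfolding seg_def by auto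
  have per: "(f^^Suc n) a = a" using n(1) fd by simp
  obtain M where M: "b = (f^^M) a" using bo by (auto simp: orbit_iff)
  have "b = (f^^(M mod Suc n)) a" using funpow_period[OF per] M by simp
  moreover have "M mod Suc n \<le> n" by (simp add: less_Suc_eq_le)
  ultimately show False using n(2) by metis
qed

lemma inv_orbit:
  assumes "f ` S \<subseteq> S" "z \<in> S" "\<And>w. w \<in> S \<Longrightarrow> g (f w) = g w" "w \<in> orbit f z"
  shows "g w = g z"
proof -
  obtain n where n: "w = (f^^n) z" using assms(4) by (auto simp: orbit_iff)
  have "g ((f^^n) z) = g z \<and> (f^^n) z \<in> S"
    by (induction n) (use assms(1,2,3) in auto)
  then show ?thesis using n by simp
qed

lemma card_lab:
  assumes pm: "pm f S" and inv: "\<And>w. w \<in> S \<Longrightarrow> g (f w) = g w"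
  shows "card (g ` S) \<le> card (orbs f S)"
  unfolding orbs_def
proof (rule card_factor)
  show "finite S" using pm by (simp add: pm_def)
  fix z z' assume zz: "z \<in> S" "z' \<in> S" "orbit f z = orbit f z'"
  then have "z' \<in> orbit f z" using orbit_self[of z' f] by simp
  then show "g z = g z'" using inv_orbit[of f S z g z'] pm zz inv by (auto simp: pm_def)
qed

lemma orbit_inv2: assumes "f (f z) = z" shows "orbit f z = {z, f z}"
proof
  show "orbit f z \<subseteq> {z, f z}" by (rule orbit_sub) (use assms in auto)
  show "{z, f z} \<subseteq> orbit f z" using orbit_self orbit_f by fast
qed

context cutting begin

definition DD :: "(('v \<times> 'v) \<times> bool) set" where
  "DD = {z. (fst z \<in> D \<and> \<not> snd z) \<or> (fst z \<in> X \<and> snd z)}"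

definition sig :: "('v \<times> 'v) \<times> bool \<Rightarrow> ('v \<times> 'v) \<times> bool" where
  "sig z = (if snd z then (oth (fst z), False) else (\<rho> (fst z), \<rho> (fst z) \<in> X))"

definition th :: "('v \<times> 'v) \<times> bool \<Rightarrow> ('v \<times> 'v) \<times> bool" where
  "th z = (rev_dart (fst z), if fst z \<in> X then \<not> snd z else snd z)"

lemma DD_iff: "(d, f) \<in> DD \<longleftrightarrow> (d \<in> D \<and> \<not> f) \<or> (d \<in> X \<and> f)"
  by (simp add: DD_def)

lemma DD_eq: "DD = (\<lambda>d. (d, False)) ` D \<union> (\<lambda>d. (d, True)) ` X"
  unfolding DD_def by force

lemma finX: "finite X"
proof -
  have "X \<subseteq> D" using X_D by blast
  then show ?thesis using finD by (rule finite_subset)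
qed

lemma finDD: "finite DD" unfolding DD_eq using finD finX by simp

lemma cardDD: "card DD = card D + card X"
proof -
  have "card DD = card ((\<lambda>d. (d, False)) ` D) + card ((\<lambda>d. (d, True)) ` X)"
    unfolding DD_eq by (rule card_Un_disjoint) (use finD finX in auto)
  also have "\<dots> = card D + card X" by (simp add: card_image inj_on_def)
  finally show ?thesis .
qed

lemma sig_in: assumes "z \<in> DD" shows "sig z \<in> DD"
proof (cases z)
  case (Pair d f)
  show ?thesis
  proof (cases f)
    case True
    then have "d \<in> X" using assms Pair by (simp add: DD_iff)
    then show ?thesis using Pair True oth_props(1) X_D by (simp add: sig_def DD_iff)
  next
    case False
    then have "d \<in> D" using assms Pair by (simp add: DD_iff)
    then show ?thesis using Pair False rho_in by (simp add: sig_def DD_iff)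
  qed
qed

lemma sig_inj: "inj_on sig DD"
proof (rule inj_onI)
  fix z z' assume z: "z \<in> DD" and z': "z' \<in> DD" and eq: "sig z = sig z'"
  obtain d f where zd: "z = (d, f)" by (cases z)
  obtain d' f' where zd': "z' = (d', f')" by (cases z')
  show "z = z'"
  proof (cases f; cases f')
    assume "f" "f'"
    then have "d \<in> X" "d' \<in> X" "oth d = oth d'" using z z' eq zd zd' by (auto simp: DD_iff sig_def)
    then have "oth (oth d) = oth (oth d')" by simp
    then have "d = d'" using oth_props(4)[OF \<open>d \<in> X\<close>] oth_props(4)[OF \<open>d' \<in> X\<close>] by simp
    then show ?thesis using zd zd' \<open>f\<close> \<open>f'\<close> by simp
  next
    assume "f" "\<not> f'"
    then have "d \<in> X" "\<rho> d' = oth d" "\<rho> d' \<notin> X" using z z' eq zd zd' by (auto simp: DD_iff sig_def)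
    then show ?thesis using oth_props(1)[OF \<open>d \<in> X\<close>] by simp
  next
    assume "\<not> f" "f'"
    then have "d' \<in> X" "\<rho> d = oth d'" "\<rho> d \<notin> X" using z z' eq zd zd' by (auto simp: DD_iff sig_def)
    then show ?thesis using oth_props(1)[OF \<open>d' \<in> X\<close>] by simp
  next
    assume "\<not> f" "\<not> f'"
    then have "d \<in> D" "d' \<in> D" "\<rho> d = \<rho> d'" using z z' eq zd zd' by (auto simp: DD_iff sig_def)
    then have "d = d'" using pm_rho by (auto simp: pm_def dest: inj_onD)
    then show ?thesis using zd zd' \<open>\<not> f\<close> \<open>\<not> f'\<close> by simp
  qed
qed

lemma pm_sig: "pm sig DD"
  unfolding pm_def using finDD sig_in sig_inj by blast

lemma th_th: "th (th z) = z"
  by (cases z) (auto simp: th_def rev_rev rev_X_iff)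

lemma th_in: assumes "z \<in> DD" shows "th z \<in> DD"
  using assms rev_in rev_X X_D by (cases z) (auto simp: th_def DD_iff)

lemma th_ne: assumes "z \<in> DD" shows "th z \<noteq> z"
  using assms rev_ne X_D by (cases z) (auto simp: th_def DD_iff)

lemma pm_th: "pm th DD"
proof -
  have "inj_on th DD" by (metis inj_onI th_th)
  then show ?thesis unfolding pm_def using finDD th_in by blast
qed

lemma card_th: "2 * card (orbs th DD) = card DD"
proof -
  have o: "orbit th z = {z, th z}" for z by (rule orbit_inv2[of th z, OF th_th])
  have U: "\<Union> (orbs th DD) = DD"
    unfolding orbs_def o using th_in by auto
  have "2 * card (orbs th DD) = card (\<Union> (orbs th DD))"
  proof (rule card_partition)
    show "finite (orbs th DD)" using finite_orbs[OF finDD] .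
    show "finite (\<Union> (orbs th DD))" using U finDD by simp
    show "\<And>c. c \<in> orbs th DD \<Longrightarrow> card c = 2"
    proof -
      fix c assume "c \<in> orbs th DD"
      then obtain z where "z \<in> DD" "c = {z, th z}" unfolding orbs_def o by auto
      then show "card c = 2" using th_ne[of z] by (metis card_2_iff)
    qed
    show "\<And>c1 c2. c1 \<in> orbs th DD \<Longrightarrow> c2 \<in> orbs th DD \<Longrightarrow> c1 \<noteq> c2 \<Longrightarrow> c1 \<inter> c2 = {}"
    proof -
      fix c1 c2 assume c: "c1 \<in> orbs th DD" "c2 \<in> orbs th DD" "c1 \<noteq> c2"
      obtain z1 where z1: "z1 \<in> DD" "c1 = orbit th z1" using c(1) unfolding orbs_def by blast
      obtain z2 where z2: "z2 \<in> DD" "c2 = orbit th z2" using c(2) unfolding orbs_def by blast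
      note z = z1(1) z2(1) z1(2) z2(2)
      show "c1 \<inter> c2 = {}"
      proof (rule ccontr)
        assume "c1 \<inter> c2 \<noteq> {}"
        then obtain w where "w \<in> orbit th z1" "w \<in> orbit th z2" using z by auto
        then have "c1 = c2" using orbit_eq2[OF pm_th z(1,2)] z by simp
        then show False using c by simp
      qed
    qed
  qed
  then show ?thesis using U by simp
qed

definition side :: "('v \<times> 'v) \<times> bool \<Rightarrow> bool" where
  "side z = (if snd z then fst z \<notin> seg \<rho> (av (fst (fst z))) (oth (av (fst (fst z))))
             else fst z \<in> seg \<rho> (av (fst (fst z))) (oth (av (fst (fst z)))))"

definition labv :: "('v \<times> 'v) \<times> bool \<Rightarrow> 'v \<times> bool" where
  "labv z = (fst (fst z), fst (fst z) \<in> CV \<and> side z)"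

lemma fst_sig: assumes "z \<in> DD" shows "fst (fst (sig z)) = fst (fst z)"
  using assms rho_fst oth_props(2) by (cases z) (auto simp: sig_def DD_iff)

lemma labv_inv: assumes zD: "z \<in> DD" shows "labv (sig z) = labv z"
proof (cases "fst (fst z) \<in> CV")
  case False then show ?thesis using fst_sig[OF zD] by (simp add: labv_def)
next
  case True
  define v where "v = fst (fst z)"
  define a where "a = av v"
  define b where "b = oth a"
  have aX: "a \<in> X" and fa: "fst a = v" using av_props True a_def v_def by auto
  have aD: "a \<in> D" using X_D aX by simp
  have bX: "b \<in> X" and fb: "fst b = v" and ba: "b \<noteq> a" and ob: "oth b = a"
    using oth_props[OF aX] b_def fa by auto
  have bo: "b \<in> orbit \<rho> a" using rho_trans aD X_D[OF bX] fa fb by simp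
  have atv: "e = a \<or> e = b" if "e \<in> X" "fst e = v" for e
    using oth_props(5)[OF aX that(1)] that(2) fa b_def by simp
  have sz: "side z = (if snd z then fst z \<notin> seg \<rho> a b else fst z \<in> seg \<rho> a b)"
    unfolding side_def a_def b_def v_def ..
  have ssz: "side (sig z) = (if snd (sig z) then fst (sig z) \<notin> seg \<rho> a b else fst (sig z) \<in> seg \<rho> a b)"
    unfolding side_def a_def b_def v_def using fst_sig[OF zD] by simp
  obtain d f where zd: "z = (d, f)" by (cases z)
  have fd: "fst d = v" using zd v_def by simp
  have "side (sig z) = side z"
  proof (cases f)
    case True
    then have dX: "d \<in> X" using zD zd by (simp add: DD_iff)
    have sg: "sig z = (oth d, False)" using zd True by (simp add: sig_def)
    show ?thesis using atv[OF dX fd]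
    proof
      assume "d = a"
      have "a \<in> seg \<rho> a b" using seg_a ba by metis
      then show ?thesis using sz ssz sg zd True seg_b[of b \<rho> a] \<open>d = a\<close> b_def by simp
    next
      assume "d = b"
      then show ?thesis using sz ssz sg zd True ob seg_b seg_a[OF ba[symmetric]] by simp
    qed
  next
    case False
    then have dD: "d \<in> D" using zD zd by (simp add: DD_iff)
    have sg: "sig z = (\<rho> d, \<rho> d \<in> X)" using zd False by (simp add: sig_def)
    show ?thesis
    proof (cases "\<rho> d \<in> X")
      case rX: True
      have "fst (\<rho> d) = v" using rho_fst[OF dD] fd by simp
      then have "\<rho> d = a \<or> \<rho> d = b" using atv rX by blast
      then show ?thesis
      proof
        assume r: "\<rho> d = a"
        have "d \<notin> seg \<rho> a b" using seg_pre_a[OF bo r] .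
        then show ?thesis using sz ssz sg zd False r rX seg_a[OF ba[symmetric]] by simp
      next
        assume r: "\<rho> d = b"
        have "d \<in> seg \<rho> a b" using seg_pre_b[OF pm_rho aD dD bo ba r] .
        then show ?thesis using sz ssz sg zd False r rX seg_b by simp
      qed
    next
      case rX: False
      have "\<rho> d \<noteq> a" "\<rho> d \<noteq> b" using rX aX bX by auto
      then have "(\<rho> d \<in> seg \<rho> a b) = (d \<in> seg \<rho> a b)"
        using seg_step[of d \<rho> a b] seg_back[OF pm_rho aD dD] by blast
      then show ?thesis using sz ssz sg zd False rX by simp
    qed
  qed
  then show ?thesis using fst_sig[OF zD] by (simp add: labv_def)
qed

lemma some_vertex_pair: "\<exists>u\<in>V. u \<noteq> v"
proof -
  obtain C where C: "C \<in> Cs" using Cne by blast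
  have l: "length C \<ge> 3" using len3[OF C] .
  have "C ! 0 \<noteq> C ! 1" using dist[OF C] l nth_eq_iff_index_eq by fastforce
  moreover have "C ! 0 \<in> set C" "C ! 1 \<in> set C" using l by (auto intro!: nth_mem)
  moreover have "set C \<subseteq> V" using cyc_of[OF C] unfolding is_cycle_def by auto
  ultimately show ?thesis by (metis subsetD)
qed

lemma dart_at: assumes "v \<in> V" shows "\<exists>d\<in>D. fst d = v"
proof -
  obtain u where u: "u \<in> V" "u \<noteq> v" using some_vertex_pair by blast
  have "(\<lambda>x y. E x y \<and> x \<in> V \<and> y \<in> V)\<^sup>*\<^sup>* v u"
    using cg assms u unfolding connected_graph_def connected_set_def by blast
  then obtain w where "E v w" using u(2) by (metis (no_types, lifting) converse_rtranclpE)
  then show ?thesis using darts_iff by (intro bexI[of _ "(v, w)"]) auto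
qed

lemma card_sig: "card V + card CV \<le> card (orbs sig DD)"
proof -
  have CVV: "CV \<subseteq> V" using cyc_of unfolding CV_def is_cycle_def by blast
  have finCV: "finite CV" using CVV finV finite_subset by blast
  have sub: "(\<lambda>v. (v, False)) ` V \<union> (\<lambda>v. (v, True)) ` CV \<subseteq> labv ` DD"
  proof
    fix p assume p: "p \<in> (\<lambda>v. (v, False)) ` V \<union> (\<lambda>v. (v, True)) ` CV"
    show "p \<in> labv ` DD"
    proof (cases "p \<in> (\<lambda>v. (v, True)) ` CV")
      case True
      then obtain v where v: "v \<in> CV" "p = (v, True)" by auto
      have aX: "av v \<in> X" and fa: "fst (av v) = v" using av_props[OF v(1)] by auto
      have "oth (av v) \<noteq> av v" using oth_props(3)[OF aX] .
      then have "av v \<in> seg \<rho> (av v) (oth (av v))" using seg_a by metis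
      then have "labv (av v, False) = p" using v fa by (simp add: labv_def side_def)
      moreover have "(av v, False) \<in> DD" using X_D[OF aX] by (simp add: DD_iff)
      ultimately show ?thesis by force
    next
      case False
      then obtain v where v: "v \<in> V" "p = (v, False)" using p by auto
      show ?thesis
      proof (cases "v \<in> CV")
        case True
        have aX: "av v \<in> X" and fa: "fst (av v) = v" using av_props[OF True] by auto
        have bX: "oth (av v) \<in> X" and fb: "fst (oth (av v)) = v" using oth_props(1,2)[OF aX] fa by auto
        have "labv (oth (av v), False) = p" using v fb seg_b[of "oth (av v)" \<rho> "av v"] by (simp add: labv_def side_def)
        moreover have "(oth (av v), False) \<in> DD" using X_D[OF bX] by (simp add: DD_iff)
        ultimately show ?thesis by force
      next
        case False
        obtain d where d: "d \<in> D" "fst d = v" using dart_at[OF v(1)] by blast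
        have "labv (d, False) = p" using v d False by (simp add: labv_def)
        moreover have "(d, False) \<in> DD" using d by (simp add: DD_iff)
        ultimately show ?thesis by force
      qed
    qed
  qed
  have "card ((\<lambda>v. (v, False)) ` V \<union> (\<lambda>v. (v, True)) ` CV) = card V + card CV"
  proof -
    have "card ((\<lambda>v. (v, False)) ` V \<union> (\<lambda>v. (v, True)) ` CV)
        = card ((\<lambda>v. (v, False)) ` V) + card ((\<lambda>v. (v, True)) ` CV)"
      by (rule card_Un_disjoint) (use finV finCV in auto)
    also have "\<dots> = card V + card CV" by (simp add: card_image inj_on_def)
    finally show ?thesis .
  qed
  moreover have "card ((\<lambda>v. (v, False)) ` V \<union> (\<lambda>v. (v, True)) ` CV) \<le> card (labv ` DD)"
    by (rule card_mono[OF _ sub]) (use finDD in simp)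
  moreover have "card (labv ` DD) \<le> card (orbs sig DD)"
    by (rule card_lab[of sig DD labv, OF pm_sig labv_inv])
  ultimately show ?thesis by linarith
qed

end


lemma refl_idx: assumes "j < length C" shows "pv C (length C - 1 - j) = length C - 1 - nx C j"
proof (cases "j + 1 = length C")
  case True
  then show ?thesis using nx_alt[OF assms] pv_alt[of 0 C, OF len_pos[OF assms]] assms by simp
next
  case False
  then have "nx C j = j + 1" using nx_alt[OF assms] by simp
  moreover have "length C - 1 - j < length C" "length C - 1 - j \<noteq> 0" using assms False by auto
  ultimately show ?thesis using pv_alt[of "length C - 1 - j" C] by simp
qed

lemma cyclic_induct_back:
  assumes "i0 < length C" "P i0" "\<And>j. j < length C \<Longrightarrow> P j \<Longrightarrow> P (pv C j)" "k < length C"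
  shows "P k"
proof -
  define Q where "Q j = P (length C - 1 - j)" for j
  have "Q (length C - 1 - k)"
  proof (rule cyclic_induct[of "length C - 1 - i0" C Q])
    show "length C - 1 - i0 < length C" using assms(1) by simp
    show "Q (length C - 1 - i0)" unfolding Q_def using assms(1,2) by simp
    show "length C - 1 - k < length C" using assms(4) by simp
    fix j assume j: "j < length C" "Q j"
    have "P (pv C (length C - 1 - j))" using assms(3) j unfolding Q_def by simp
    then show "Q (nx C j)" unfolding Q_def using refl_idx[OF j(1)] by simp
  qed
  then show ?thesis unfolding Q_def using assms(4) by simp
qed

context cutting begin

definition dset :: "'v list \<Rightarrow> bool \<Rightarrow> ('v \<times> 'v) set" where
  "dset C b = (if b then fw C ` {..<length C} else bw C ` {..<length C})"

lemma dset_uniq: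
  assumes C: "C \<in> Cs" and C': "C' \<in> Cs" and d: "d \<in> dset C b" and d': "d \<in> dset C' b'"
  shows "C = C' \<and> b = b'"
proof -
  have fs: "fst d \<in> set C" using d unfolding dset_def
    by (cases b) (auto simp: fst_fw fst_bw intro!: nth_mem nx_lt)
  have fs': "fst d \<in> set C'" using d' unfolding dset_def
    by (cases b') (auto simp: fst_fw fst_bw intro!: nth_mem nx_lt)
  have CC: "C = C'" using disj[OF C C'] fs fs' by blast
  have "b = b'"
  proof (rule ccontr)
    assume "b \<noteq> b'"
    then obtain i i' where "i < length C" "i' < length C" "fw C i = bw C i'"
      using d d' CC unfolding dset_def by (cases b; cases b') auto
    then show False using fw_ne_bw[OF C] by blast
  qed
  then show ?thesis using CC by simp
qed

lemma X_dset: "d \<in> X \<Longrightarrow> \<exists>C\<in>Cs. \<exists>b. d \<in> dset C b"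
  unfolding X_def dset_def by (auto intro: exI[of _ True] exI[of _ False])

lemma dset_X: "C \<in> Cs \<Longrightarrow> d \<in> dset C b \<Longrightarrow> d \<in> X"
  unfolding X_def dset_def by (cases b) auto

lemma dset_step: assumes C: "C \<in> Cs" and d: "d \<in> dset C b" shows "oth (rev_dart d) \<in> dset C b"
proof (cases b)
  case True
  then obtain i where i: "i < length C" "d = fw C i" using d unfolding dset_def by auto
  have "oth (rev_dart d) = oth (bw C i)" using i(2) by (simp add: rev_fw)
  then have "oth (rev_dart d) = fw C (nx C i)" using oth_bw[OF C i(1)] by simp
  then show ?thesis using True nx_lt[OF i(1)] unfolding dset_def by simp
next
  case False
  then obtain i where i: "i < length C" "d = bw C i" using d unfolding dset_def by auto
  have "oth (rev_dart d) = oth (fw C i)" using i(2) by (simp add: rev_bw)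
  then have "oth (rev_dart d) = bw C (pv C i)" using oth_fw[OF C i(1)] by simp
  then show ?thesis using False pv_lt[OF i(1)] unfolding dset_def by simp
qed

definition labf :: "('v \<times> 'v) \<times> bool \<Rightarrow> ('v \<times> 'v) set + ('v list \<times> bool)" where
  "labf z = (if fst z \<in> X \<and> \<not> snd z then Inr (SOME p. p \<in> Cs \<times> UNIV \<and> fst z \<in> dset (fst p) (snd p))
             else Inl (orbit (face_perm \<rho>) (fst z)))"

lemma labf_inr: assumes "C \<in> Cs" "d \<in> dset C b"
  shows "(SOME p. p \<in> Cs \<times> UNIV \<and> d \<in> dset (fst p) (snd p)) = (C, b)"
proof (rule some_equality)
  show "(C, b) \<in> Cs \<times> UNIV \<and> d \<in> dset (fst (C, b)) (snd (C, b))" using assms by simp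
  fix p assume "p \<in> Cs \<times> UNIV \<and> d \<in> dset (fst p) (snd p)"
  then show "p = (C, b)" using dset_uniq[OF assms(1) _ assms(2)] by (cases p) auto
qed

lemma fp_iota: assumes "d \<in> D" shows "(sig \<circ> th) (d, d \<in> X) = (face_perm \<rho> d, face_perm \<rho> d \<in> X)"
  by (simp add: sig_def th_def face_perm_def)

lemma fp_X: assumes "d \<in> X" shows "(sig \<circ> th) (d, False) = (oth (rev_dart d), False)"
  using assms rev_X by (simp add: sig_def th_def)

lemma labf_inv: assumes zD: "z \<in> DD" shows "labf ((sig \<circ> th) z) = labf z"
proof -
  obtain d f where zd: "z = (d, f)" by (cases z)
  show ?thesis
  proof (cases "d \<in> X \<and> \<not> f")
    case True
    then obtain C b where C: "C \<in> Cs" "d \<in> dset C b" using X_dset by blast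
    have s: "(sig \<circ> th) z = (oth (rev_dart d), False)" using fp_X True zd by simp
    have "oth (rev_dart d) \<in> dset C b" using dset_step[OF C] .
    then have "labf ((sig \<circ> th) z) = Inr (C, b)"
      using s labf_inr[OF C(1)] dset_X[OF C(1)] by (simp add: labf_def)
    moreover have "labf z = Inr (C, b)" using zd True labf_inr[OF C] by (simp add: labf_def)
    ultimately show ?thesis by simp
  next
    case False
    have dD: "d \<in> D" using zD zd X_D[of d] by (auto simp: DD_iff)
    have fX: "f = (d \<in> X)" using zD zd False by (auto simp: DD_iff)
    have s: "(sig \<circ> th) z = (face_perm \<rho> d, face_perm \<rho> d \<in> X)" using fp_iota[OF dD] zd fX by simp
    have "orbit (face_perm \<rho>) (face_perm \<rho> d) = orbit (face_perm \<rho>) d"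
      using orbit_eq[OF pm_fp dD orbit_f] .
    then show ?thesis using s zd False by (simp add: labf_def)
  qed
qed

lemma finCs: "finite Cs"
proof -
  have "inj_on (\<lambda>C. fw C 0) Cs"
  proof (rule inj_onI)
    fix C C' assume C: "C \<in> Cs" "C' \<in> Cs" "fw C 0 = fw C' 0"
    have "0 < length C" "0 < length C'" using len3 C(1,2) by fastforce+
    then have "fw C 0 \<in> dset C True" "fw C' 0 \<in> dset C' True" unfolding dset_def by auto
    then show "C = C'" using dset_uniq[OF C(1,2)] C(3) by simp
  qed
  moreover have "(\<lambda>C. fw C 0) ` Cs \<subseteq> D" using fw_D len3 by force
  ultimately show ?thesis using finD by (meson finite_imageD finite_subset)
qed

lemma card_fp: "card (faces E \<rho>) + 2 * card Cs \<le> card (orbs (sig \<circ> th) DD)"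
proof -
  have sub: "Inl ` faces E \<rho> \<union> Inr ` (Cs \<times> UNIV) \<subseteq> labf ` DD"
  proof
    fix p :: "('v \<times> 'v) set + ('v list \<times> bool)"
    assume "p \<in> Inl ` faces E \<rho> \<union> Inr ` (Cs \<times> UNIV)"
    then consider (l) Q where "Q \<in> faces E \<rho>" "p = Inl Q" | (r) C b where "C \<in> Cs" "p = Inr (C, b)" by auto
    then show "p \<in> labf ` DD"
    proof cases
      case l
      then obtain d where d: "d \<in> D" "Q = orbit (face_perm \<rho>) d" by (auto simp: faces_def)
      have "labf (d, d \<in> X) = p" using l d by (simp add: labf_def)
      moreover have "(d, d \<in> X) \<in> DD" using d by (simp add: DD_iff)
      ultimately show ?thesis by force
    next
      case r
      define d where "d = (if b then fw C 0 else bw C 0)"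
      have dd: "d \<in> dset C b" using len3[OF r(1)] unfolding d_def dset_def by auto
      have dX: "d \<in> X" using dset_X[OF r(1) dd] .
      have "labf (d, False) = p" using r dX labf_inr[OF r(1) dd] by (simp add: labf_def)
      moreover have "(d, False) \<in> DD" using X_D[OF dX] by (simp add: DD_iff)
      ultimately show ?thesis by force
    qed
  qed
  have finF: "finite (faces E \<rho>)" unfolding faces_def using finD by simp
  have "card (Inl ` faces E \<rho> \<union> Inr ` (Cs \<times> (UNIV :: bool set))) = card (faces E \<rho>) + 2 * card Cs"
  proof -
    have "card (Inl ` faces E \<rho> \<union> Inr ` (Cs \<times> (UNIV :: bool set)))
        = card (Inl ` faces E \<rho> :: (('v \<times> 'v) set + ('v list \<times> bool)) set) + card (Inr ` (Cs \<times> (UNIV :: bool set)) :: (('v \<times> 'v) set + ('v list \<times> bool)) set)"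
      by (rule card_Un_disjoint) (use finF finCs in auto)
    also have "\<dots> = card (faces E \<rho>) + card (Cs \<times> (UNIV :: bool set))" by (simp add: card_image)
    also have "card (Cs \<times> (UNIV :: bool set)) = 2 * card Cs" by (simp add: card_cartesian_product)
    finally show ?thesis .
  qed
  moreover have "card (Inl ` faces E \<rho> \<union> Inr ` (Cs \<times> (UNIV :: bool set))) \<le> card (labf ` DD)"
    by (rule card_mono[OF _ sub]) (use finDD in simp)
  moreover have "card (labf ` DD) \<le> card (orbs (sig \<circ> th) DD)"
    by (rule card_lab[of "sig \<circ> th" DD labf, OF pm_comp[OF pm_sig pm_th] labf_inv])
  ultimately show ?thesis by linarith
qed

lemma cyc_darts_rev: assumes C: "C \<in> Cs" shows "cyc_darts (rev C) = bw C ` {..<length C}"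
proof -
  let ?n = "length C"
  have el: "((rev C) ! i, (rev C) ! ((i + 1) mod ?n)) = bw C (pv C (?n - 1 - i))" if i: "i < ?n" for i
  proof -
    have a: "(rev C) ! i = C ! (?n - 1 - i)" using i by (simp add: rev_nth)
    have "(i + 1) mod ?n < ?n" by (rule mod_less_divisor[OF len_pos[OF i]])
    then have b: "(rev C) ! ((i + 1) mod ?n) = C ! (?n - 1 - nx C i)" by (simp add: rev_nth nx_def)
    have "?n - 1 - i < ?n" using i by simp
    then have "nx C (pv C (?n - 1 - i)) = ?n - 1 - i" by (rule nx_pv)
    then show ?thesis using a b refl_idx[OF i] by (simp add: bw_def)
  qed
  show ?thesis
  proof
    show "cyc_darts (rev C) \<subseteq> bw C ` {..<?n}"
    proof
      fix e assume "e \<in> cyc_darts (rev C)"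
      then obtain i where i: "i < ?n" "e = ((rev C) ! i, (rev C) ! ((i + 1) mod ?n))"
        unfolding cyc_darts_def by auto
      then show "e \<in> bw C ` {..<?n}" using el pv_lt[of "?n - 1 - i" C] by auto
    qed
    show "bw C ` {..<?n} \<subseteq> cyc_darts (rev C)"
    proof
      fix e assume "e \<in> bw C ` {..<?n}"
      then obtain j where j: "j < ?n" "e = bw C j" by auto
      define i where "i = ?n - 1 - nx C j"
      have i: "i < ?n" using j len_pos unfolding i_def by fastforce
      have "?n - 1 - i = nx C j" using nx_lt[OF j(1)] unfolding i_def by simp
      then have "e = ((rev C) ! i, (rev C) ! ((i + 1) mod ?n))" using el[OF i] pv_nx[OF j(1)] j by simp
      then show "e \<in> cyc_darts (rev C)" using i unfolding cyc_darts_def by auto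
    qed
  qed
qed

lemma nf_fw: assumes C: "C \<in> Cs" shows "\<exists>i<length C. \<rho> (bw C i) \<notin> X"
proof (rule ccontr)
  assume "\<not> ?thesis"
  then have all: "\<rho> (bw C i) \<in> X" if "i < length C" for i using that by blast
  have st: "face_perm \<rho> (fw C i) = fw C (nx C i)" if i: "i < length C" for i
  proof -
    have "\<rho> (bw C i) = oth (bw C i)" using rho_X[OF bw_X[OF C i] all[OF i]] .
    then show ?thesis using oth_bw[OF C i] by (simp add: face_perm_def rev_fw)
  qed
  have n0: "0 < length C" using len3[OF C] by linarith
  have "orbit (face_perm \<rho>) (fw C 0) = fw C ` {..<length C}"
  proof
    show "orbit (face_perm \<rho>) (fw C 0) \<subseteq> fw C ` {..<length C}"
    proof (rule orbit_sub)
      show "fw C 0 \<in> fw C ` {..<length C}" using n0 by simp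
      fix w assume "w \<in> fw C ` {..<length C}"
      then obtain i where i: "i < length C" "w = fw C i" by auto
      show "face_perm \<rho> w \<in> fw C ` {..<length C}" unfolding i(2) st[OF i(1)]
        by (intro image_eqI[OF refl]) (simp add: nx_lt[OF i(1)])
    qed
    show "fw C ` {..<length C} \<subseteq> orbit (face_perm \<rho>) (fw C 0)"
    proof
      fix e assume "e \<in> fw C ` {..<length C}"
      then obtain j where j: "j < length C" "e = fw C j" by auto
      have "fw C j \<in> orbit (face_perm \<rho>) (fw C 0)"
        by (rule cyclic_induct[of 0 C, OF n0 orbit_self _ j(1)]) (metis orbit_step st)
      then show "e \<in> orbit (face_perm \<rho>) (fw C 0)" using j by simp
    qed
  qed
  then have "cyc_darts C \<in> faces E \<rho>" unfolding faces_def cyc_darts_fw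
    by (metis fw_D[OF C n0] image_eqI)
  then show False using nf C by (simp add: facial_def)
qed

lemma nf_bw: assumes C: "C \<in> Cs" shows "\<exists>i<length C. \<rho> (fw C i) \<notin> X"
proof (rule ccontr)
  assume "\<not> ?thesis"
  then have all: "\<rho> (fw C i) \<in> X" if "i < length C" for i using that by blast
  have st: "face_perm \<rho> (bw C i) = bw C (pv C i)" if i: "i < length C" for i
  proof -
    have "\<rho> (fw C i) = oth (fw C i)" using rho_X[OF fw_X[OF C i] all[OF i]] .
    then show ?thesis using oth_fw[OF C i] by (simp add: face_perm_def rev_bw)
  qed
  have n0: "0 < length C" using len3[OF C] by linarith
  have "orbit (face_perm \<rho>) (bw C 0) = bw C ` {..<length C}"
  proof
    show "orbit (face_perm \<rho>) (bw C 0) \<subseteq> bw C ` {..<length C}"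
    proof (rule orbit_sub)
      show "bw C 0 \<in> bw C ` {..<length C}" using n0 by simp
      fix w assume "w \<in> bw C ` {..<length C}"
      then obtain i where i: "i < length C" "w = bw C i" by auto
      show "face_perm \<rho> w \<in> bw C ` {..<length C}" unfolding i(2) st[OF i(1)]
        by (intro image_eqI[OF refl]) (simp add: pv_lt[OF i(1)])
    qed
    show "bw C ` {..<length C} \<subseteq> orbit (face_perm \<rho>) (bw C 0)"
    proof
      fix e assume "e \<in> bw C ` {..<length C}"
      then obtain j where j: "j < length C" "e = bw C j" by auto
      have "bw C j \<in> orbit (face_perm \<rho>) (bw C 0)"
        by (rule cyclic_induct_back[of 0 C, OF n0 orbit_self _ j(1)]) (metis orbit_step st)
      then show "e \<in> orbit (face_perm \<rho>) (bw C 0)" using j by simp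
    qed
  qed
  then have "cyc_darts (rev C) \<in> faces E \<rho>" unfolding faces_def cyc_darts_rev[OF C]
    by (metis bw_D[OF C n0] image_eqI)
  then show False using nf C by (simp add: facial_def)
qed

end


context cutting begin

abbreviation conn :: "('v \<times> 'v) \<times> bool \<Rightarrow> ('v \<times> 'v) \<times> bool \<Rightarrow> bool" where
  "conn \<equiv> (symc (Rab sig th DD))\<^sup>*\<^sup>*"

lemma conn_sig: "z \<in> DD \<Longrightarrow> conn z (sig z)"
  by (rule symc_edge) (simp add: Rab_def)

lemma conn_th: "z \<in> DD \<Longrightarrow> conn z (th z)"
  by (rule symc_edge) (simp add: Rab_def)

lemma conn_sym: "conn a b \<Longrightarrow> conn b a" by (rule symc_sym)

lemma conn_trans: "conn a b \<Longrightarrow> conn b c \<Longrightarrow> conn a c" by (rule rtranclp_trans)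

lemma sig_iter:
  assumes "d \<in> D" "fst d \<notin> CV"
  shows "(sig^^k) (d, False) = ((\<rho>^^k) d, False) \<and> (\<rho>^^k) d \<in> D \<and> fst ((\<rho>^^k) d) = fst d"
proof (induction k)
  case 0 then show ?case using assms by simp
next
  case (Suc k)
  define e where "e = (\<rho>^^k) d"
  have e: "e \<in> D" "fst e = fst d" "(sig^^k) (d, False) = (e, False)" using Suc e_def by auto
  have "\<rho> e \<notin> X" using fst_X_CV rho_fst[OF e(1)] e(2) assms(2) by metis
  then have "sig (e, False) = (\<rho> e, False)" by (simp add: sig_def)
  then show ?case using e rho_in rho_fst e_def by simp
qed

lemma conn_orbit_sig:
  assumes "z \<in> DD" "w \<in> orbit sig z" shows "conn z w"
proof -
  obtain n where n: "w = (sig^^n) z" using assms(2) by (auto simp: orbit_iff)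
  have "conn z ((sig^^n) z) \<and> (sig^^n) z \<in> DD"
  proof (induction n)
    case 0 then show ?case using assms(1) by simp
  next
    case (Suc n)
    then show ?case using conn_sig[of "(sig^^n) z"] sig_in conn_trans by auto
  qed
  then show ?thesis using n by simp
qed

lemma A1:
  assumes "d \<in> D" "d' \<in> D" "fst d = fst d'" "fst d \<notin> CV"
  shows "conn (d, False) (d', False)"
proof -
  obtain k where k: "d' = (\<rho>^^k) d" using rho_trans[OF assms(1,2,3)] by (auto simp: orbit_iff)
  have "(sig^^k) (d, False) = (d', False)" using sig_iter[OF assms(1,4)] k by simp
  then have "(d', False) \<in> orbit sig (d, False)" unfolding orbit_iff by metis
  moreover have "(d, False) \<in> DD" using assms(1) by (simp add: DD_iff)
  ultimately show ?thesis using conn_orbit_sig by blast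
qed

lemma connected_all: "\<exists>z0\<in>DD. \<forall>z\<in>DD. conn z0 z"
proof -
  obtain C0 where C0: "C0 \<in> Cs" using Cne by blast
  obtain i0 where i0: "i0 < length C0" "\<rho> (fw C0 i0) \<notin> X" using nf_bw[OF C0] by blast
  define d1 where "d1 = \<rho> (fw C0 i0)"
  have d1D: "d1 \<in> D" using rho_in fw_D[OF C0 i0(1)] d1_def by simp
  have fd1: "fst d1 \<in> CV" using rho_fst[OF fw_D[OF C0 i0(1)]] fst_X_CV[OF fw_X[OF C0 i0(1)]] d1_def by simp
  have sd1: "snd d1 \<in> V - CV" using nonX_snd[OF d1D _ fd1] i0(2) d1_def by simp
  define d0 where "d0 = rev_dart d1"
  have d0D: "d0 \<in> D" using rev_in[OF d1D] d0_def by simp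
  have fd0: "fst d0 \<in> V - CV" using sd1 d0_def by (simp add: rev_dart_def)
  define z0 where "z0 = (d0, False)"
  have z0D: "z0 \<in> DD" using d0D z0_def by (simp add: DD_iff)
  have A: "conn z0 (d, False)" if "d \<in> D" "fst d \<in> V - CV" for d
  proof -
    have path: "(\<lambda>x y. E x y \<and> x \<in> V - CV \<and> y \<in> V - CV)\<^sup>*\<^sup>* (fst d0) (fst d)"
      using rest_conn fd0 that(2) unfolding connected_set_def by blast
    have "\<forall>e\<in>D. fst e = fst d \<longrightarrow> conn z0 (e, False)"
      using path
    proof (induction rule: rtranclp_induct)
      case base
      show ?case using A1[OF d0D] fd0 z0_def by auto
    next
      case (step w w')
      have ww: "(w, w') \<in> D" using step.hyps(2) darts_iff by simp
      have c1: "conn z0 ((w, w'), False)" using step.IH ww by auto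
      have nX: "(w, w') \<notin> X" using fst_X_CV step.hyps(2) by fastforce
      have "th ((w, w'), False) = ((w', w), False)" using nX by (simp add: th_def rev_dart_def)
      then have c2: "conn z0 ((w', w), False)"
        using conn_th[of "((w, w'), False)"] ww c1 conn_trans by (simp add: DD_iff)
      have w'D: "(w', w) \<in> D" using rev_in[OF ww] by (simp add: rev_dart_def)
      show ?case
      proof (intro ballI impI)
        fix e assume "e \<in> D" "fst e = w'"
        then have "conn ((w', w), False) (e, False)" using A1[OF w'D \<open>e \<in> D\<close>] step.hyps(2) by simp
        then show "conn z0 (e, False)" using c2 conn_trans by blast
      qed
    qed
    then show ?thesis using that(1) by blast
  qed
  have B: "conn z0 (d, False)" if "d \<in> D" "d \<notin> X" for d
  proof (cases "fst d \<in> CV")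
    case False
    have "fst d \<in> V" using that(1) darts_iff Eprops by blast
    then show ?thesis using A that False by simp
  next
    case True
    have sd: "snd d \<in> V - CV" using nonX_snd[OF that True] .
    have "conn z0 (rev_dart d, False)" using A[OF rev_in[OF that(1)]] sd by (simp add: rev_dart_def)
    moreover have "th (d, False) = (rev_dart d, False)" using that(2) by (simp add: th_def)
    then have "conn (rev_dart d, False) (d, False)"
      using conn_th[of "(d, False)"] that(1) conn_sym by (simp add: DD_iff)
    ultimately show ?thesis using conn_trans by blast
  qed
  have fwF: "conn z0 (fw C j, False)" if C: "C \<in> Cs" and j: "j < length C" for C j
  proof -
    obtain i where i: "i < length C" "\<rho> (fw C i) \<notin> X" using nf_bw[OF C] by blast
    show ?thesis
    proof (rule cyclic_induct[of i C, OF i(1) _ _ j])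
      have "sig (fw C i, False) = (\<rho> (fw C i), False)" using i(2) by (simp add: sig_def)
      then have "conn (fw C i, False) (\<rho> (fw C i), False)"
        using conn_sig[of "(fw C i, False)"] fw_D[OF C i(1)] by (simp add: DD_iff)
      then show "conn z0 (fw C i, False)"
        using B[OF rho_in[OF fw_D[OF C i(1)]] i(2)] conn_sym conn_trans by blast
    next
      fix k assume k: "k < length C" "conn z0 (fw C k, False)"
      have "th (fw C k, False) = (bw C k, True)" using fw_X[OF C k(1)] by (simp add: th_def rev_fw)
      then have "conn (fw C k, False) (bw C k, True)"
        using conn_th[of "(fw C k, False)"] fw_D[OF C k(1)] by (simp add: DD_iff)
      moreover have "sig (bw C k, True) = (fw C (nx C k), False)" using oth_bw[OF C k(1)] by (simp add: sig_def)
      then have "conn (bw C k, True) (fw C (nx C k), False)"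
        using conn_sig[of "(bw C k, True)"] bw_X[OF C k(1)] by (simp add: DD_iff)
      ultimately show "conn z0 (fw C (nx C k), False)" using k(2) conn_trans by blast
    qed
  qed
  have bwF: "conn z0 (bw C j, False)" if C: "C \<in> Cs" and j: "j < length C" for C j
  proof -
    obtain i where i: "i < length C" "\<rho> (bw C i) \<notin> X" using nf_fw[OF C] by blast
    show ?thesis
    proof (rule cyclic_induct[of i C, OF i(1) _ _ j])
      have "sig (bw C i, False) = (\<rho> (bw C i), False)" using i(2) by (simp add: sig_def)
      then have "conn (bw C i, False) (\<rho> (bw C i), False)"
        using conn_sig[of "(bw C i, False)"] bw_D[OF C i(1)] by (simp add: DD_iff)
      then show "conn z0 (bw C i, False)"
        using B[OF rho_in[OF bw_D[OF C i(1)]] i(2)] conn_sym conn_trans by blast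
    next
      fix k assume k: "k < length C" "conn z0 (bw C k, False)"
      have k': "nx C k < length C" using nx_lt[OF k(1)] .
      have "th (bw C (nx C k), False) = (fw C (nx C k), True)" using bw_X[OF C k'] by (simp add: th_def rev_bw)
      then have "conn (bw C (nx C k), False) (fw C (nx C k), True)"
        using conn_th[of "(bw C (nx C k), False)"] bw_D[OF C k'] by (simp add: DD_iff)
      moreover have "sig (fw C (nx C k), True) = (bw C k, False)"
        using oth_fw[OF C k'] pv_nx[OF k(1)] by (simp add: sig_def)
      then have "conn (fw C (nx C k), True) (bw C k, False)"
        using conn_sig[of "(fw C (nx C k), True)"] fw_X[OF C k'] by (simp add: DD_iff)
      ultimately have "conn (bw C (nx C k), False) (bw C k, False)" using conn_trans by blast
      then show "conn z0 (bw C (nx C k), False)" using k(2) conn_sym conn_trans by blast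
    qed
  qed
  have bwT: "conn z0 (bw C j, True)" if C: "C \<in> Cs" and j: "j < length C" for C j
  proof -
    have "th (fw C j, False) = (bw C j, True)" using fw_X[OF C j] by (simp add: th_def rev_fw)
    then have "conn (fw C j, False) (bw C j, True)"
      using conn_th[of "(fw C j, False)"] fw_D[OF C j] by (simp add: DD_iff)
    then show ?thesis using fwF[OF C j] conn_trans by blast
  qed
  have fwT: "conn z0 (fw C j, True)" if C: "C \<in> Cs" and j: "j < length C" for C j
  proof -
    have "th (bw C j, False) = (fw C j, True)" using bw_X[OF C j] by (simp add: th_def rev_bw)
    then have "conn (bw C j, False) (fw C j, True)"
      using conn_th[of "(bw C j, False)"] bw_D[OF C j] by (simp add: DD_iff)
    then show ?thesis using bwF[OF C j] conn_trans by blast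
  qed
  have "\<forall>z\<in>DD. conn z0 z"
  proof
    fix z assume zD: "z \<in> DD"
    obtain d f where zd: "z = (d, f)" by (cases z)
    show "conn z0 z"
    proof (cases "d \<in> X")
      case False
      then have "d \<in> D" "\<not> f" using zD zd by (auto simp: DD_iff)
      then show ?thesis using B False zd by simp
    next
      case True
      obtain C i where C: "C \<in> Cs" "i < length C" and di: "d = fw C i \<or> d = bw C i"
        using X_cases[OF True] by blast
      show ?thesis using di fwF[OF C] bwF[OF C] fwT[OF C] bwT[OF C] zd by (cases f) auto
    qed
  qed
  then show ?thesis using z0D by blast
qed

lemma card_X: "card X \<le> 2 * card CV"
proof -
  have CVV: "CV \<subseteq> V" using cyc_of unfolding CV_def is_cycle_def by blast
  have finCV: "finite CV" using CVV finV finite_subset by blast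
  have inj: "inj_on (\<lambda>e. (fst e, e = av (fst e))) X"
  proof (rule inj_onI)
    fix e e' assume e: "e \<in> X" "e' \<in> X" "(fst e, e = av (fst e)) = (fst e', e' = av (fst e'))"
    define v where "v = fst e"
    have fe': "fst e' = v" using e(3) v_def by simp
    have aX: "av v \<in> X" and fa: "fst (av v) = v" using av_props fst_X_CV[OF e(1)] v_def by auto
    have c1: "e = av v \<or> e = oth (av v)" using oth_props(5)[OF aX e(1)] fa v_def by simp
    have c2: "e' = av v \<or> e' = oth (av v)" using oth_props(5)[OF aX e(2)] fa fe' by simp
    have "(e = av v) = (e' = av v)" using e(3) v_def fe' by simp
    then show "e = e'" using c1 c2 oth_props(3)[OF aX] by metis
  qed
  have "(\<lambda>e. (fst e, e = av (fst e))) ` X \<subseteq> CV \<times> UNIV" using fst_X_CV by auto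
  then have "card X \<le> card (CV \<times> (UNIV :: bool set))"
    by (rule card_inj_on_le[OF inj]) (use finCV in simp)
  also have "card (CV \<times> (UNIV :: bool set)) = 2 * card CV" by (simp add: card_cartesian_product)
  finally show ?thesis .
qed

lemma card_D: "card D \<le> 2 * card (edges E)"
proof -
  define s where "s d = (SOME d'. d' \<in> D \<and> {fst d', snd d'} = {fst d, snd d})" for d
  have s: "s d \<in> D \<and> {fst (s d), snd (s d)} = {fst d, snd d}" if "d \<in> D" for d
    unfolding s_def by (rule someI_ex) (use that in blast)
  have inj: "inj_on (\<lambda>d. ({fst d, snd d}, d = s d)) D"
  proof (rule inj_onI)
    fix d d' assume dd: "d \<in> D" "d' \<in> D" "({fst d, snd d}, d = s d) = ({fst d', snd d'}, d' = s d')"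
    have eq: "{fst d, snd d} = {fst d', snd d'}" using dd(3) by simp
    have ss: "s d = s d'" unfolding s_def using eq by simp
    have opts: "x = d \<or> x = rev_dart d" if "{fst x, snd x} = {fst d, snd d}" for x
      using that by (cases x; cases d) (auto simp: rev_dart_def doubleton_eq_iff)
    have o1: "d' = d \<or> d' = rev_dart d" using opts eq by simp
    have o2: "s d = d \<or> s d = rev_dart d" using opts s[OF dd(1)] by simp
    have ne: "rev_dart d \<noteq> d" using rev_ne dd(1) by simp
    show "d = d'" using dd(3) ss o1 o2 ne by auto
  qed
  have "(\<lambda>d. ({fst d, snd d}, d = s d)) ` D \<subseteq> edges E \<times> UNIV"
    unfolding edges_def using darts_iff by auto
  moreover have "finite (edges E)"
  proof -
    have "edges E = (\<lambda>d. {fst d, snd d}) ` D"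
    proof (rule set_eqI)
      fix x show "x \<in> edges E \<longleftrightarrow> x \<in> (\<lambda>d. {fst d, snd d}) ` D"
      proof
        assume "x \<in> edges E"
        then obtain u v where "x = {u, v}" "E u v" unfolding edges_def by blast
        then show "x \<in> (\<lambda>d. {fst d, snd d}) ` D" using darts_iff[of "(u, v)"] by (intro image_eqI[of _ _ "(u, v)"]) auto
      next
        assume "x \<in> (\<lambda>d. {fst d, snd d}) ` D"
        then obtain d where "d \<in> D" "x = {fst d, snd d}" by blast
        then show "x \<in> edges E" unfolding edges_def using darts_iff by blast
      qed
    qed
    then show ?thesis using finD by simp
  qed
  ultimately have "card D \<le> card (edges E \<times> (UNIV :: bool set))"
    by (intro card_inj_on_le[OF inj]) simp_all
  also have "card (edges E \<times> (UNIV :: bool set)) = 2 * card (edges E)" by (simp add: card_cartesian_product)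
  finally show ?thesis .
qed

theorem main:
  assumes oe: "orientable_embedding V E \<rho> g"
  shows "card Cs \<le> g"
proof -
  obtain z0 where z0: "z0 \<in> DD" "\<forall>z\<in>DD. conn z0 z" using connected_all by blast
  have L: "card (orbs sig DD) + card (orbs th DD) + card (orbs (sig \<circ> th) DD) \<le> card DD + 2"
    using L_conn[OF pm_sig pm_th z0(1)] z0(2) by blast
  have Dne: "D \<noteq> {}"
  proof -
    obtain C where C: "C \<in> Cs" using Cne by blast
    then have "fw C 0 \<in> D" using fw_D len3 by fastforce
    then show ?thesis by blast
  qed
  have nf_eq: "num_faces E \<rho> = card (faces E \<rho>)" using Dne by (simp add: num_faces_def)
  have eu: "int (card V) - int (card (edges E)) + int (card (faces E \<rho>)) = 2 - 2 * int g"
    using oe nf_eq by (simp add: orientable_embedding_def)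
  have c1: "card V + card CV \<le> card (orbs sig DD)" by (rule card_sig)
  have c2: "2 * card (orbs th DD) = card DD" by (rule card_th)
  have c3: "card (faces E \<rho>) + 2 * card Cs \<le> card (orbs (sig \<circ> th) DD)" by (rule card_fp)
  have c4: "card DD = card D + card X" by (rule cardDD)
  have c5: "card X \<le> 2 * card CV" by (rule card_X)
  have c6: "card D \<le> 2 * card (edges E)" by (rule card_D)
  show ?thesis using L c1 c2 c3 c4 c5 c6 eu by linarith
qed

end

theorem lemma2:
  fixes V :: "'v set" and E :: "'v \<Rightarrow> 'v \<Rightarrow> bool"
    and \<rho> :: "'v \<times> 'v \<Rightarrow> 'v \<times> 'v" and g :: nat and \<C> :: "'v list set"
  assumes "orientable_embedding V E \<rho> g"
    and "peripheral_family V E \<C>"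
    and "\<forall>C\<in>\<C>. \<not> facial E \<rho> C"
  shows "card \<C> \<le> g"
proof (cases "\<C> = {}")
  case True then show ?thesis by simp
next
  case False
  interpret cutting V E \<rho> \<C>
    using assms False by unfold_locales (auto simp: orientable_embedding_def)
  show ?thesis using main[OF assms(1)] .
qed


end
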